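(* Let $(B,T)$ be an $n$-string tangle diagram which is adequate. Then the link diagram $L_T$ is adequate.
   Context: A link diagram is a generic projection of a link to $S^2$ with over/under information at each double point (crossing). At each crossing there are two ways to resolve: the $A$-resolution and the $A^{-1}$-resolution (Kauffman's convention: the $A$-resolution joins the two regions near the crossing that are swept out when the over-strand is rotated counterclockwise, and the $A^{-1}$-resolution joins the other two). Resolving every crossing by the $A$-resolution (resp. $A^{-1}$-resolution) yields a disjoint collection of circles called the all-$A$ (resp. all-$A^{-1}$) resolution; at each former crossing one records a grey segment joining the two arcs of the resolution that came from that crossing. A link diagram is $A$-adequate (resp. $A^{-1}$-adequate) if every grey segment of the all-$A$ (resp. all-$A^{-1}$) resolution has its two endpoints on distinct circles; it is adequate if it is both $A$-adequate and $A^{-1}$-adequate. An $n$-string tangle diagram $(B,T)$ is a diagram of a disk $B$ together with a set $T$ of $n$ arcs in $B$ (with crossings) whose $2n$ endpoints lie on $\partial B$ and are numbered $1,\dots,2n$ clockwise. It is adequate if, however the endpoints of $T$ are joined by pairwise disjoint planar arcs outside $B$, the resulting link diagram is adequate. Given $(B,T)$, let $(B^*,T^* )$ be its mirror image, with the endpoints of $T^*$ numbered $1,\dots,2n$ counterclockwise; $L_T$ is the link diagram obtained by gluing $B$ and $B^*$ along their boundaries so that endpoint $j$ of $T$ is attached to endpoint $j$ of $T^*$ for every $j$. *)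

theory Defs
  imports Main
begin

text \<open>A diagram on the sphere is encoded as a combinatorial map: a finite set of darts
  (half-edges) H, a fixed-point-free involution a pairing the two darts of each edge,
  and a permutation s of H giving the counterclockwise cyclic order of darts around each
  vertex.  Vertices are s-orbits, faces are orbits of s o a.\<close>

definition dorbit :: "('h \<Rightarrow> 'h) \<Rightarrow> 'h \<Rightarrow> 'h set" where
  "dorbit f x = range (\<lambda>k. (f ^^ k) x)"

definition map_rel :: "'h set \<Rightarrow> ('h \<Rightarrow> 'h) \<Rightarrow> ('h \<Rightarrow> 'h) \<Rightarrow> ('h \<times> 'h) set" where
  "map_rel H a s = {(x, y). x \<in> H \<and> (y = a x \<or> y = s x)}"

definition edge_involution :: "'h set \<Rightarrow> ('h \<Rightarrow> 'h) \<Rightarrow> bool" where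
  "edge_involution H a \<longleftrightarrow> (\<forall>h\<in>H. a h \<in> H \<and> a h \<noteq> h \<and> a (a h) = h)"

text \<open>Genus zero: V - E + F = 2 * (number of connected components).\<close>
definition planar_map :: "'h set \<Rightarrow> ('h \<Rightarrow> 'h) \<Rightarrow> ('h \<Rightarrow> 'h) \<Rightarrow> bool" where
  "planar_map H a s \<longleftrightarrow>
     finite H \<and> edge_involution H a \<and> bij_betw s H H \<and>
     int (card ((\<lambda>h. dorbit s h) ` H)) - int (card H div 2)
       + int (card ((\<lambda>h. dorbit (s \<circ> a) h) ` H))
     = 2 * int (card ((\<lambda>h. (map_rel H a s)\<^sup>* `` {h}) ` H))"

text \<open>A (generalised) link diagram: darts H, edge involution a, rotation s, and a set Ov of
  darts lying on the over-strand.  Vertices of valence 4 are crossings (Ov contains exactly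
  one pair of opposite darts there); vertices of valence 2 are mere points subdividing an
  edge (no crossing).\<close>
definition link_diagram :: "'h set \<Rightarrow> ('h \<Rightarrow> 'h) \<Rightarrow> ('h \<Rightarrow> 'h) \<Rightarrow> 'h set \<Rightarrow> bool" where
  "link_diagram H a s Ov \<longleftrightarrow> finite H \<and> edge_involution H a \<and> bij_betw s H H \<and> Ov \<subseteq> H \<and>
     (\<forall>h\<in>H. (s (s h) = h \<and> s h \<noteq> h \<and> h \<notin> Ov) \<or>
             ((s ^^ 4) h = h \<and> s (s h) \<noteq> h \<and> (h \<in> Ov \<longleftrightarrow> s (s h) \<in> Ov) \<and> (h \<in> Ov \<longleftrightarrow> s h \<notin> Ov)))"

text \<open>At a crossing with counterclockwise darts
  d0 (over), d1 (under), d2 (over), d3 (under): the A-resolution (Kauffman) merges the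
  regions swept by the over-strand rotated counterclockwise, i.e. the corners (d0,d1) and
  (d2,d3); so it joins d0 with d3 and d1 with d2.  The A^-1 resolution joins d0 with d1 and
  d2 with d3.  At 2-valent points the strand simply continues.\<close>
definition smoothA :: "'h set \<Rightarrow> ('h \<Rightarrow> 'h) \<Rightarrow> 'h set \<Rightarrow> 'h \<Rightarrow> 'h" where
  "smoothA H s Ov h = (if h \<in> Ov then inv_into H s h else s h)"

definition smoothAinv :: "'h set \<Rightarrow> ('h \<Rightarrow> 'h) \<Rightarrow> 'h set \<Rightarrow> 'h \<Rightarrow> 'h" where
  "smoothAinv H s Ov h =
     (if h \<in> Ov then s h else if s (s h) \<noteq> h then inv_into H s h else s h)"

definition same_circle :: "'h set \<Rightarrow> ('h \<Rightarrow> 'h) \<Rightarrow> ('h \<Rightarrow> 'h) \<Rightarrow> 'h \<Rightarrow> 'h \<Rightarrow> bool" where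
  "same_circle H a sm x y \<longleftrightarrow> (x, y) \<in> (map_rel H a sm)\<^sup>*"

text \<open>Grey segment at a crossing with over-dart h: in the all-A resolution it joins the
  arcs {h, s^-1 h} and {s h, s^2 h}; in the all-A^-1 resolution it joins the arcs
  {h, s h} and {s^-1 h, s^2 h}.\<close>
definition A_adequate :: "'h set \<Rightarrow> ('h \<Rightarrow> 'h) \<Rightarrow> ('h \<Rightarrow> 'h) \<Rightarrow> 'h set \<Rightarrow> bool" where
  "A_adequate H a s Ov \<longleftrightarrow> (\<forall>h\<in>Ov. \<not> same_circle H a (smoothA H s Ov) h (s h))"

definition Ainv_adequate :: "'h set \<Rightarrow> ('h \<Rightarrow> 'h) \<Rightarrow> ('h \<Rightarrow> 'h) \<Rightarrow> 'h set \<Rightarrow> bool" where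
  "Ainv_adequate H a s Ov \<longleftrightarrow>
     (\<forall>h\<in>Ov. \<not> same_circle H a (smoothAinv H s Ov) h (inv_into H s h))"

definition adequate :: "'h set \<Rightarrow> ('h \<Rightarrow> 'h) \<Rightarrow> ('h \<Rightarrow> 'h) \<Rightarrow> 'h set \<Rightarrow> bool" where
  "adequate H a s Ov \<longleftrightarrow> A_adequate H a s Ov \<and> Ainv_adequate H a s Ov"

text \<open>An n-string tangle diagram (B,T): crossing darts C with counterclockwise rotation sg
  (all orbits of size 4) and over-darts Ov; the darts of the tangle are Inl d (d in C) and
  Inr j for the endpoint j in {1..2n} on the boundary circle; al pairs the two ends of
  each edge.\<close>

definition tdarts :: "nat \<Rightarrow> 'd set \<Rightarrow> ('d + nat) set" where
  "tdarts n C = Inl ` C \<union> Inr ` {1..2*n}"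

text \<open>Capping the disk: the outside of B collapsed to one vertex whose darts are the
  endpoints; since they are numbered clockwise on the boundary of B, the counterclockwise
  rotation at the cap vertex is j -> j+1 (mod 2n).\<close>
definition cap_rot :: "nat \<Rightarrow> ('d \<Rightarrow> 'd) \<Rightarrow> 'd + nat \<Rightarrow> 'd + nat" where
  "cap_rot n sg x = (case x of Inl d \<Rightarrow> Inl (sg d)
                       | Inr j \<Rightarrow> Inr (if j = 2*n then 1 else Suc j))"

text \<open>Going straight along a strand: along an edge, or through a crossing.\<close>
definition strand_rel :: "nat \<Rightarrow> 'd set \<Rightarrow> ('d \<Rightarrow> 'd) \<Rightarrow> ('d + nat \<Rightarrow> 'd + nat) \<Rightarrow> (('d + nat) \<times> ('d + nat)) set" where
  "strand_rel n C sg al = {(x, y). x \<in> tdarts n C \<and>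
      (y = al x \<or> (\<exists>d. x = Inl d \<and> y = Inl (sg (sg d))))}"

definition tangle_diagram :: "nat \<Rightarrow> 'd set \<Rightarrow> ('d \<Rightarrow> 'd) \<Rightarrow> 'd set \<Rightarrow> ('d + nat \<Rightarrow> 'd + nat) \<Rightarrow> bool" where
  "tangle_diagram n C sg Ov al \<longleftrightarrow>
     finite C \<and> bij_betw sg C C \<and> Ov \<subseteq> C \<and>
     (\<forall>d\<in>C. (sg ^^ 4) d = d \<and> sg (sg d) \<noteq> d \<and>
             (d \<in> Ov \<longleftrightarrow> sg (sg d) \<in> Ov) \<and> (d \<in> Ov \<longleftrightarrow> sg d \<notin> Ov)) \<and>
     edge_involution (tdarts n C) al \<and>
     \<comment> \<open>T consists of arcs only: every strand reaches the boundary\<close>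
     (\<forall>x\<in>tdarts n C. \<exists>j\<in>{1..2*n}. (x, Inr j) \<in> (strand_rel n C sg al)\<^sup>*) \<and>
     \<comment> \<open>the diagram lies in the disk B with endpoints 1..2n in clockwise order\<close>
     planar_map (tdarts n C) al (cap_rot n sg)"

text \<open>Pairwise disjoint planar arcs outside B joining the endpoints = non-crossing perfect
  matchings of {1..2n}.\<close>
definition noncrossing_matching :: "nat \<Rightarrow> (nat \<Rightarrow> nat) \<Rightarrow> bool" where
  "noncrossing_matching n m \<longleftrightarrow>
     (\<forall>j\<in>{1..2*n}. m j \<in> {1..2*n} \<and> m j \<noteq> j \<and> m (m j) = j) \<and>
     \<not> (\<exists>i j k l. 1 \<le> i \<and> i < j \<and> j < k \<and> k < l \<and> l \<le> 2*n \<and> m i = k \<and> m j = l)"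

text \<open>Closure of the tangle by the matching m: each endpoint j becomes a 2-valent point
  with inner dart Inl (Inr j) and outer dart Inr j; outer arcs pair Inr j with Inr (m j).\<close>
definition cl_darts :: "nat \<Rightarrow> 'd set \<Rightarrow> (('d + nat) + nat) set" where
  "cl_darts n C = Inl ` tdarts n C \<union> Inr ` {1..2*n}"

definition cl_edge :: "('d + nat \<Rightarrow> 'd + nat) \<Rightarrow> (nat \<Rightarrow> nat) \<Rightarrow> ('d + nat) + nat \<Rightarrow> ('d + nat) + nat" where
  "cl_edge al m x = (case x of Inl y \<Rightarrow> Inl (al y) | Inr j \<Rightarrow> Inr (m j))"

definition cl_rot :: "('d \<Rightarrow> 'd) \<Rightarrow> ('d + nat) + nat \<Rightarrow> ('d + nat) + nat" where
  "cl_rot sg x = (case x of Inl (Inl d) \<Rightarrow> Inl (Inl (sg d))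
                           | Inl (Inr j) \<Rightarrow> Inr j
                           | Inr j \<Rightarrow> Inl (Inr j))"

definition cl_over :: "'d set \<Rightarrow> (('d + nat) + nat) set" where
  "cl_over Ov = (\<lambda>d. Inl (Inl d)) ` Ov"

definition adequate_tangle :: "nat \<Rightarrow> 'd set \<Rightarrow> ('d \<Rightarrow> 'd) \<Rightarrow> 'd set \<Rightarrow> ('d + nat \<Rightarrow> 'd + nat) \<Rightarrow> bool" where
  "adequate_tangle n C sg Ov al \<longleftrightarrow>
     (\<forall>m. noncrossing_matching n m \<longrightarrow>
          adequate (cl_darts n C) (cl_edge al m) (cl_rot sg) (cl_over Ov))"

text \<open>Darts of L_T: Inl (Inl d) crossing darts of T, Inl (Inr d) crossing darts of the
  mirror image T*, and Inr (j, True) / Inr (j, False) the two darts of the 2-valent point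
  on the common boundary circle where endpoint j of T meets endpoint j of T*.  The mirror
  image is the planar reflection: same edges and over/under data, reversed rotation.
  Since T* is numbered counterclockwise and the sphere orientation restricts to the planar
  orientation on both B and B*, T and T* appear on the sphere exactly as drawn.\<close>

definition LT_darts :: "nat \<Rightarrow> 'd set \<Rightarrow> (('d + 'd) + nat \<times> bool) set" where
  "LT_darts n C = (\<lambda>d. Inl (Inl d)) ` C \<union> (\<lambda>d. Inl (Inr d)) ` C \<union> Inr ` ({1..2*n} \<times> UNIV)"

definition LT_emb :: "bool \<Rightarrow> 'd + nat \<Rightarrow> ('d + 'd) + nat \<times> bool" where
  "LT_emb b x = (case x of Inl d \<Rightarrow> Inl (if b then Inl d else Inr d) | Inr j \<Rightarrow> Inr (j, b))"

definition LT_edge :: "('d + nat \<Rightarrow> 'd + nat) \<Rightarrow> ('d + 'd) + nat \<times> bool \<Rightarrow> ('d + 'd) + nat \<times> bool" where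
  "LT_edge al x = (case x of Inl (Inl d) \<Rightarrow> LT_emb True (al (Inl d))
                           | Inl (Inr d) \<Rightarrow> LT_emb False (al (Inl d))
                           | Inr (j, b) \<Rightarrow> LT_emb b (al (Inr j)))"

definition LT_rot :: "'d set \<Rightarrow> ('d \<Rightarrow> 'd) \<Rightarrow> ('d + 'd) + nat \<times> bool \<Rightarrow> ('d + 'd) + nat \<times> bool" where
  "LT_rot C sg x = (case x of Inl (Inl d) \<Rightarrow> Inl (Inl (sg d))
                            | Inl (Inr d) \<Rightarrow> Inl (Inr (inv_into C sg d))
                            | Inr (j, b) \<Rightarrow> Inr (j, \<not> b))"

definition LT_over :: "'d set \<Rightarrow> (('d + 'd) + nat \<times> bool) set" where
  "LT_over Ov = (\<lambda>d. Inl (Inl d)) ` Ov \<union> (\<lambda>d. Inl (Inr d)) ` Ov"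

end

theory Submission
  imports Defs
begin


section \<open>Generic orbit lemmas\<close>

lemma dorbit_funpow: "(f ^^ k) x \<in> dorbit f x"
  unfolding dorbit_def by (rule rangeI)

lemma dorbit_self: "x \<in> dorbit f x"
  using dorbit_funpow[of 0 f x] by simp

lemma dorbit_step:
  assumes "y \<in> dorbit f x" shows "f y \<in> dorbit f x"
proof -
  from assms obtain k where "y = (f ^^ k) x" by (auto simp: dorbit_def)
  then have "f y = (f ^^ Suc k) x" by simp
  then show ?thesis using dorbit_funpow by metis
qed

lemma dorbit_induct[consumes 1, case_names base step]:
  assumes "y \<in> dorbit f x" "P x" "\<And>z. z \<in> dorbit f x \<Longrightarrow> P z \<Longrightarrow> P (f z)"
  shows "P y"
proof -
  from assms(1) obtain k where k: "y = (f ^^ k) x" by (auto simp: dorbit_def)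
  have "P ((f ^^ k) x)"
  proof (induction k)
    case 0 then show ?case using assms(2) by simp
  next
    case (Suc k) then show ?case using assms(3)[OF dorbit_funpow Suc.IH] by simp
  qed
  then show ?thesis using k by simp
qed

lemma dorbit_trans: "y \<in> dorbit f x \<Longrightarrow> dorbit f y \<subseteq> dorbit f x"
proof
  fix z assume yx: "y \<in> dorbit f x" and "z \<in> dorbit f y"
  from \<open>z \<in> dorbit f y\<close> show "z \<in> dorbit f x"
    by (induction rule: dorbit_induct) (auto intro: dorbit_step yx)
qed

lemma dorbit_closed:
  assumes "\<And>z. z \<in> Y \<Longrightarrow> f z \<in> Y" "x \<in> Y"
  shows "dorbit f x \<subseteq> Y"
proof
  fix z assume "z \<in> dorbit f x"
  then show "z \<in> Y" by (induction rule: dorbit_induct) (auto simp: assms)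
qed

lemma dorbit_subset: "f ` X \<subseteq> X \<Longrightarrow> x \<in> X \<Longrightarrow> dorbit f x \<subseteq> X"
  by (rule dorbit_closed) auto

lemma dorbit_cong:
  assumes "\<And>z. z \<in> Y \<Longrightarrow> f z \<in> Y" "\<And>z. z \<in> Y \<Longrightarrow> f z = g z" "x \<in> Y"
  shows "dorbit f x = dorbit g x"
proof -
  have "(f ^^ k) x = (g ^^ k) x \<and> (f ^^ k) x \<in> Y" for k
  proof (induction k)
    case 0 then show ?case using assms(3) by simp
  next
    case (Suc k)
    then have m: "(f ^^ k) x \<in> Y" and e: "(f ^^ k) x = (g ^^ k) x" by auto
    have "(f ^^ Suc k) x = g ((g ^^ k) x)" using assms(2)[OF m] e by simp
    moreover have "(f ^^ Suc k) x \<in> Y" using assms(1)[OF m] by simp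
    ultimately show ?case by simp
  qed
  then show ?thesis unfolding dorbit_def by auto
qed

lemma bij_funpow:
  assumes "bij_betw f X X"
  shows "bij_betw (f ^^ k) X X"
proof (induction k)
  case 0 then show ?case using bij_betw_id[of X] by (simp add: id_def)
next
  case (Suc k)
  have "bij_betw (f \<circ> (f ^^ k)) X X" using bij_betw_trans[OF Suc assms] .
  then show ?case by (simp add: comp_def)
qed

lemma bij_funpow_inj:
  assumes "bij_betw f X X"
  shows "inj_on (f ^^ k) X \<and> (f ^^ k) ` X \<subseteq> X"
  using bij_funpow[OF assms, of k] unfolding bij_betw_def by simp

lemma perm_return:
  assumes "finite X" "bij_betw f X X" "x \<in> X"
  shows "\<exists>p>0. (f ^^ p) x = x"
proof -
  let ?g = "\<lambda>k. (f ^^ k) x"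
  have img: "?g ` {0..card X} \<subseteq> X" using bij_funpow_inj[OF assms(2)] assms(3) by auto
  have "\<not> inj_on ?g {0..card X}"
  proof
    assume "inj_on ?g {0..card X}"
    then have "card (?g ` {0..card X}) = Suc (card X)" by (simp add: card_image)
    moreover have "card (?g ` {0..card X}) \<le> card X" using card_mono[OF assms(1) img] .
    ultimately show False by simp
  qed
  then obtain i j where ij: "i \<noteq> j" "?g i = ?g j"
    by (auto simp: inj_on_def)
  obtain a b where ab: "a < b" "?g a = ?g b"
  proof (cases "i < j")
    case True then show ?thesis using ij that[of i j] by auto
  next
    case False then show ?thesis using ij that[of j i] by auto
  qed
  have "(f ^^ a) ((f ^^ (b - a)) x) = (f ^^ (a + (b - a))) x"
    by (simp add: funpow_add)
  also have "a + (b - a) = b" using ab by simp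
  finally have eq: "(f ^^ a) ((f ^^ (b - a)) x) = (f ^^ a) x" using ab by simp
  have "(f ^^ (b - a)) x \<in> X" using bij_funpow_inj[OF assms(2)] assms(3) by auto
  then have "(f ^^ (b - a)) x = x"
    using eq bij_funpow_inj[OF assms(2), of a] assms(3) unfolding inj_on_def by blast
  then show ?thesis using ab by (intro exI[of _ "b - a"]) auto
qed

lemma perm_back:
  assumes "finite X" "bij_betw f X X" "x \<in> X"
  shows "x \<in> dorbit f (f x)"
proof -
  obtain p where p: "p > 0" "(f ^^ p) x = x" using perm_return[OF assms] by blast
  then obtain q where q: "p = Suc q" by (cases p) auto
  have "(f ^^ q) (f x) = (f ^^ p) x"
    unfolding q by (simp only: funpow_Suc_right o_apply)
  then have "(f ^^ q) (f x) = x" using p by simp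
  then show ?thesis using dorbit_funpow[of q f "f x"] by simp
qed

lemma bij_into: "bij_betw f X X \<Longrightarrow> x \<in> X \<Longrightarrow> f x \<in> X"
  by (auto simp: bij_betw_def)

lemma dorbit_sym:
  assumes "finite X" "bij_betw f X X" "x \<in> X" "y \<in> dorbit f x"
  shows "x \<in> dorbit f y"
  using assms(4)
proof (induction rule: dorbit_induct)
  case base then show ?case by (rule dorbit_self)
next
  case (step z)
  have fX: "f ` X \<subseteq> X" using assms(2) by (auto simp: bij_betw_def)
  have "z \<in> X" using dorbit_subset[OF fX assms(3)] step by auto
  then have "z \<in> dorbit f (f z)" by (rule perm_back[OF assms(1,2)])
  then have "dorbit f z \<subseteq> dorbit f (f z)" by (rule dorbit_trans)
  then show ?case using step(2) by (rule subsetD)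
qed

lemma dorbit_eq:
  assumes "finite X" "bij_betw f X X" "x \<in> X" "y \<in> dorbit f x"
  shows "dorbit f y = dorbit f x"
  using dorbit_trans[OF assms(4)] dorbit_trans[OF dorbit_sym[OF assms]] by (rule subset_antisym)

definition zc :: "('a \<Rightarrow> 'a) \<Rightarrow> 'a set \<Rightarrow> nat" where
  "zc f X = card (dorbit f ` X)"

lemma zc_cong:
  assumes "f ` X \<subseteq> X" "\<And>z. z \<in> X \<Longrightarrow> f z = g z"
  shows "zc f X = zc g X"
proof -
  have "dorbit f x = dorbit g x" if "x \<in> X" for x
    using dorbit_cong[of X f g x] assms that by auto
  then have "dorbit f ` X = dorbit g ` X" by (intro image_cong) auto
  then show ?thesis unfolding zc_def by simp
qed

definition sw :: "'a \<Rightarrow> 'a \<Rightarrow> 'a \<Rightarrow> 'a" where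
  "sw a b x = (if x = a then b else if x = b then a else x)"

lemma sw_sw: "sw a b (sw a b x) = x"
  by (simp add: sw_def)

lemma sw_in: "a \<in> X \<Longrightarrow> b \<in> X \<Longrightarrow> x \<in> X \<Longrightarrow> sw a b x \<in> X"
  by (simp add: sw_def)

lemma bij_sw: "a \<in> X \<Longrightarrow> b \<in> X \<Longrightarrow> bij_betw (sw a b) X X"
  by (rule bij_betw_byWitness[where f' = "sw a b"]) (auto simp: sw_sw sw_in)

lemma bij_comp_sw: "bij_betw f X X \<Longrightarrow> a \<in> X \<Longrightarrow> b \<in> X \<Longrightarrow> bij_betw (f \<circ> sw a b) X X"
  using bij_betw_trans[OF bij_sw[of a X b]] by auto



locale transp =
  fixes X f a b
  assumes fin: "finite X" and fb: "bij_betw f X X" and aX: "a \<in> X" and bX: "b \<in> X" and ab: "a \<noteq> b"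
begin

definition h where "h = f \<circ> sw a b"

lemma hb: "bij_betw h X X" unfolding h_def using bij_comp_sw[OF fb aX bX] .

lemma fX: "x \<in> X \<Longrightarrow> f x \<in> X" using fb by (auto simp: bij_betw_def)

lemma h_a: "h a = f b" by (simp add: sw_def h_def)
lemma h_b: "h b = f a" using ab by (simp add: sw_def h_def)
lemma h_other: "z \<noteq> a \<Longrightarrow> z \<noteq> b \<Longrightarrow> h z = f z" by (simp add: sw_def h_def)

lemma outside:
  assumes "x \<in> X" "a \<notin> dorbit f x" "b \<notin> dorbit f x"
  shows "dorbit h x = dorbit f x"
proof -
  have "dorbit f x = dorbit h x"
  proof (rule dorbit_cong[where Y = "dorbit f x"])
    fix z assume z: "z \<in> dorbit f x"
    show "f z \<in> dorbit f x" using z by (rule dorbit_step)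
    have "z \<noteq> a" "z \<noteq> b" using z assms by auto
    then show "f z = h z" by (simp add: h_other)
  qed (rule dorbit_self)
  then show ?thesis by simp
qed

lemma fsym: "x \<in> X \<Longrightarrow> y \<in> dorbit f x \<Longrightarrow> x \<in> dorbit f y"
  using dorbit_sym[OF fin fb] by blast
lemma feq: "x \<in> X \<Longrightarrow> y \<in> dorbit f x \<Longrightarrow> dorbit f y = dorbit f x"
  using dorbit_eq[OF fin fb] by blast
lemma heq: "x \<in> X \<Longrightarrow> y \<in> dorbit h x \<Longrightarrow> dorbit h y = dorbit h x"
  using dorbit_eq[OF fin hb] by blast

lemma fin_img: "finite (g ` X)" using fin by simp

lemma same_case:
  assumes "b \<in> dorbit f a"
  shows "zc h X \<le> zc f X + 1"
proof -
  have claim: "x \<in> dorbit h a \<union> dorbit h b" if "x \<in> dorbit f a" for x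
    using that
  proof (induction rule: dorbit_induct)
    case base then show ?case by (rule UnI1, rule dorbit_self)
  next
    case (step z)
    show ?case
    proof (cases "z = a")
      case True
      have "h b \<in> dorbit h b" using dorbit_step[OF dorbit_self] .
      then show ?thesis using True h_b by simp
    next
      case False note za = this
      show ?thesis
      proof (cases "z = b")
        case True
        have "h a \<in> dorbit h a" using dorbit_step[OF dorbit_self] .
        then show ?thesis using True h_a by simp
      next
        case False
        then have "f z = h z" using za h_other by simp
        then show ?thesis using step(2) dorbit_step[of z h a] dorbit_step[of z h b] by auto
      qed
    qed
  qed
  let ?A = "dorbit f ` X"
  have sub: "dorbit h ` X \<subseteq> (?A - {dorbit f a}) \<union> {dorbit h a, dorbit h b}"
  proof
    fix Q assume "Q \<in> dorbit h ` X"
    then obtain x where x: "x \<in> X" "Q = dorbit h x" by auto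
    show "Q \<in> (?A - {dorbit f a}) \<union> {dorbit h a, dorbit h b}"
    proof (cases "x \<in> dorbit f a")
      case True
      then have "x \<in> dorbit h a \<or> x \<in> dorbit h b" using claim by auto
      then have "dorbit h x = dorbit h a \<or> dorbit h x = dorbit h b"
        using heq[OF aX, of x] heq[OF bX, of x] by blast
      then show ?thesis using x by blast
    next
      case False
      have na: "a \<notin> dorbit f x" using fsym[OF x(1)] False by blast
      have nb: "b \<notin> dorbit f x"
      proof
        assume "b \<in> dorbit f x"
        then have "x \<in> dorbit f b" using fsym[OF x(1)] by blast
        then show False using feq[OF aX assms] False by simp
      qed
      have "Q = dorbit f x" using outside[OF x(1) na nb] x by simp
      moreover have "dorbit f x \<noteq> dorbit f a" using False dorbit_self[of x f] by auto
      ultimately show ?thesis using x by auto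
    qed
  qed
  have "card (dorbit h ` X) \<le> card ((?A - {dorbit f a}) \<union> {dorbit h a, dorbit h b})"
    by (rule card_mono[OF _ sub]) (simp add: fin)
  also have "\<dots> \<le> card (?A - {dorbit f a}) + card {dorbit h a, dorbit h b}"
    by (rule card_Un_le)
  also have "\<dots> \<le> card (?A - {dorbit f a}) + 2"
    by (simp add: card_insert_le_m1)
  also have "card (?A - {dorbit f a}) = card ?A - 1"
    using aX by (simp add: card_Diff_singleton)
  finally have "card (dorbit h ` X) \<le> card ?A - 1 + 2" .
  moreover have "?A \<noteq> {}" using aX by auto
  then have "card ?A \<ge> 1" using fin_img by (simp add: Suc_le_eq card_gt_0_iff)
  ultimately show ?thesis unfolding zc_def by linarith
qed

lemma diff_case:
  assumes "b \<notin> dorbit f a"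
  shows "zc h X + 1 \<le> zc f X"
proof -
  let ?Oa = "dorbit f a" let ?Ob = "dorbit f b"
  have a_nOb: "a \<notin> ?Ob" using fsym[OF bX] assms by blast
  have b_Ob: "b \<in> ?Ob" and a_Oa: "a \<in> ?Oa" by (rule dorbit_self)+
  have A: "dorbit h a \<subseteq> ?Oa \<union> ?Ob"
  proof (rule dorbit_closed)
    fix z assume z: "z \<in> ?Oa \<union> ?Ob"
    have "sw a b z \<in> ?Oa \<union> ?Ob" using z a_Oa b_Ob by (auto simp: sw_def)
    then show "h z \<in> ?Oa \<union> ?Ob" using dorbit_step[of _ f a] dorbit_step[of _ f b] by (auto simp: h_def)
  qed (simp add: a_Oa)
  have B: "?Ob \<subseteq> dorbit h a"
  proof
    fix x assume "x \<in> ?Ob"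
    moreover have "dorbit f (f b) = ?Ob" using feq[OF bX dorbit_step[OF dorbit_self]] .
    ultimately have "x \<in> dorbit f (f b)" by simp
    then show "x \<in> dorbit h a"
    proof (induction rule: dorbit_induct)
      case base then show ?case using h_a dorbit_step[OF dorbit_self, of h a] by simp
    next
      case (step z)
      have zOb: "z \<in> ?Ob" using step(1) \<open>dorbit f (f b) = ?Ob\<close> by simp
      then have "z \<noteq> a" using a_nOb by auto
      show ?case
      proof (cases "z = b")
        case True then show ?thesis using h_a dorbit_step[OF dorbit_self, of h a] by simp
      next
        case False
        then show ?thesis using h_other[OF \<open>z \<noteq> a\<close> False] dorbit_step[OF step(2)] by simp
      qed
    qed
  qed
  have C: "?Oa \<subseteq> dorbit h a"
  proof
    fix x assume "x \<in> ?Oa"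
    then show "x \<in> dorbit h a"
    proof (induction rule: dorbit_induct)
      case base then show ?case by (rule dorbit_self)
    next
      case (step z)
      have "z \<noteq> b" using step(1) assms by auto
      show ?case
      proof (cases "z = a")
        case True
        have "b \<in> dorbit h a" using B b_Ob by auto
        then show ?thesis using True h_b dorbit_step[of b h a] by simp
      next
        case False
        then show ?thesis using h_other[OF False \<open>z \<noteq> b\<close>] dorbit_step[OF step(2)] by simp
      qed
    qed
  qed
  have hA: "dorbit h a = ?Oa \<union> ?Ob" using A B C by auto
  let ?A = "dorbit f ` X"
  have sub: "dorbit h ` X \<subseteq> (?A - {?Oa, ?Ob}) \<union> {?Oa \<union> ?Ob}"
  proof
    fix Q assume "Q \<in> dorbit h ` X"
    then obtain x where x: "x \<in> X" "Q = dorbit h x" by auto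
    show "Q \<in> (?A - {?Oa, ?Ob}) \<union> {?Oa \<union> ?Ob}"
    proof (cases "x \<in> ?Oa \<union> ?Ob")
      case True
      then have "x \<in> dorbit h a" using hA by simp
      then have "dorbit h x = dorbit h a" using heq[OF aX, of x] by blast
      then show ?thesis using x hA by simp
    next
      case False
      have na: "a \<notin> dorbit f x" using fsym[OF x(1)] False by blast
      have nb: "b \<notin> dorbit f x" using fsym[OF x(1)] False by blast
      have "Q = dorbit f x" using outside[OF x(1) na nb] x by simp
      moreover have "dorbit f x \<noteq> ?Oa" "dorbit f x \<noteq> ?Ob" using False dorbit_self[of x f] by auto
      ultimately show ?thesis using x by auto
    qed
  qed
  have ne: "?Oa \<noteq> ?Ob" using a_Oa a_nOb by blast
  have sub2: "{?Oa, ?Ob} \<subseteq> ?A" using aX bX by auto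
  have "card (dorbit h ` X) \<le> card ((?A - {?Oa, ?Ob}) \<union> {?Oa \<union> ?Ob})"
    by (rule card_mono[OF _ sub]) (simp add: fin)
  also have "\<dots> \<le> card (?A - {?Oa, ?Ob}) + card {?Oa \<union> ?Ob}"
    by (rule card_Un_le)
  also have "card (?A - {?Oa, ?Ob}) = card ?A - 2"
    using card_Diff_subset[OF _ sub2] ne by simp
  also have "card ?A \<ge> 2"
    using card_mono[OF fin_img sub2] ne by simp
  then have "card ?A - 2 + card {?Oa \<union> ?Ob} + 1 = card ?A" by simp
  finally show ?thesis unfolding zc_def by linarith
qed

end

lemma transp_U:
  assumes "finite X" "bij_betw f X X" "a \<in> X" "b \<in> X"
  shows "zc (f \<circ> sw a b) X \<le> zc f X + 1"
proof (cases "a = b")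
  case True
  have fX: "\<forall>z\<in>X. f z \<in> X" using assms(2) by (auto simp: bij_betw_def)
  have "zc (f \<circ> sw a b) X = zc f X"
    using True fX by (intro zc_cong) (auto simp: sw_def)
  then show ?thesis by simp
next
  case False
  interpret transp X f a b using assms False by unfold_locales auto
  show ?thesis
  proof (cases "b \<in> dorbit f a")
    case True then show ?thesis using same_case unfolding h_def by simp
  next
    case False then show ?thesis using diff_case unfolding h_def by simp
  qed
qed

lemma transp_M:
  assumes "finite X" "bij_betw f X X" "a \<in> X" "b \<in> X" "b \<notin> dorbit f a"
  shows "zc (f \<circ> sw a b) X + 1 \<le> zc f X"
proof -
  have "a \<noteq> b" using assms(5) dorbit_self by metis
  interpret transp X f a b using assms \<open>a \<noteq> b\<close> by unfold_locales auto
  show ?thesis using diff_case assms(5) unfolding h_def .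
qed



definition inv_on :: "('a \<Rightarrow> 'a) \<Rightarrow> 'a set \<Rightarrow> bool" where
  "inv_on t X \<longleftrightarrow> (\<forall>x\<in>X. t x \<in> X \<and> t (t x) = x)"

definition mv :: "('a \<Rightarrow> 'a) \<Rightarrow> 'a set \<Rightarrow> 'a set" where
  "mv t X = {x\<in>X. t x \<noteq> x}"

lemma inv_bij: "inv_on t X \<Longrightarrow> bij_betw t X X"
  unfolding inv_on_def by (rule bij_betw_byWitness[where f' = t]) auto

lemma inv_decomp:
  assumes fin: "finite X" and inv: "inv_on t X" and a: "a \<in> mv t X"
  defines "b \<equiv> t a"
  defines "t0 \<equiv> (\<lambda>x. if x = a \<or> x = b then x else t x)"
  shows "inv_on t0 X" "mv t0 X = mv t X - {a, b}" "card (mv t0 X) + 2 = card (mv t X)"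
    "\<And>x. x \<in> X \<Longrightarrow> t x = t0 (sw a b x)" "a \<in> X" "b \<in> X" "a \<noteq> b" "t b = a"
proof -
  have aX: "a \<in> X" and ab: "a \<noteq> b" using a unfolding mv_def b_def by auto
  have bX: "b \<in> X" and tb: "t b = a" using aX inv unfolding inv_on_def b_def by auto
  show "a \<in> X" "b \<in> X" "a \<noteq> b" "t b = a" using aX bX ab tb by auto
  show inv0: "inv_on t0 X"
    unfolding inv_on_def t0_def using inv tb unfolding inv_on_def b_def by auto
  show mv0: "mv t0 X = mv t X - {a, b}"
    unfolding mv_def t0_def by auto
  have "{a, b} \<subseteq> mv t X" using a ab tb bX unfolding mv_def b_def by auto
  moreover have "finite (mv t X)" using fin unfolding mv_def by simp
  ultimately have "card (mv t X - {a, b}) = card (mv t X) - 2"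
    using ab by (simp add: card_Diff_subset)
  moreover have "card (mv t X) \<ge> 2"
    using card_mono[OF \<open>finite (mv t X)\<close> \<open>{a, b} \<subseteq> mv t X\<close>] ab by simp
  ultimately show "card (mv t0 X) + 2 = card (mv t X)" using mv0 by simp
  show "\<And>x. x \<in> X \<Longrightarrow> t x = t0 (sw a b x)"
    unfolding t0_def sw_def using tb ab b_def by auto
qed

lemma rtrancl_class_eq:
  assumes "sym R" "(x, y) \<in> R\<^sup>*"
  shows "R\<^sup>* `` {x} = R\<^sup>* `` {y}"
proof -
  have "(y, x) \<in> R\<^sup>*" using assms sym_rtrancl[OF assms(1)] unfolding sym_def by blast
  then show ?thesis using assms(2) by (auto intro: rtrancl_trans)
qed

definition ncl :: "('a \<times> 'a) set \<Rightarrow> 'a set \<Rightarrow> nat" where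
  "ncl R X = card ((\<lambda>x. R\<^sup>* `` {x}) ` X)"

lemma join_card:
  assumes fin: "finite X" and sR: "sym R" and aX: "a \<in> X" and bX: "b \<in> X"
  shows "ncl R X \<le> ncl (R \<union> {(a, b), (b, a)}) X + 1"
proof -
  let ?R2 = "R \<union> {(a, b), (b, a)}"
  let ?K = "\<lambda>x. R\<^sup>* `` {x}" let ?K2 = "\<lambda>x. ?R2\<^sup>* `` {x}"
  have keep: "?K2 x = ?K x" if "?K x \<noteq> ?K a" "?K x \<noteq> ?K b" for x
  proof
    show "?K x \<subseteq> ?K2 x" using rtrancl_mono[of R ?R2] by auto
    show "?K2 x \<subseteq> ?K x"
    proof
      fix y assume "y \<in> ?K2 x"
      then have "(x, y) \<in> ?R2\<^sup>*" by simp
      then show "y \<in> ?K x"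
      proof (induction rule: rtrancl_induct)
        case base then show ?case by simp
      next
        case (step y z)
        show ?case
        proof (cases "(y, z) \<in> R")
          case True then show ?thesis using step by (auto intro: rtrancl_into_rtrancl)
        next
          case False
          then have "(y = a \<and> z = b) \<or> (y = b \<and> z = a)" using step(2) by auto
          then show ?thesis
          proof
            assume "y = a \<and> z = b"
            then have "?K x = ?K a" using rtrancl_class_eq[OF sR, of x a] step(3) by simp
            then show ?thesis using that by simp
          next
            assume "y = b \<and> z = a"
            then have "?K x = ?K b" using rtrancl_class_eq[OF sR, of x b] step(3) by simp
            then show ?thesis using that by simp
          qed
        qed
      qed
    qed
  qed
  have sub: "?K ` X \<subseteq> (?K2 ` X - {?K2 a}) \<union> {?K a, ?K b}"
  proof
    fix Q assume "Q \<in> ?K ` X"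
    then obtain x where x: "x \<in> X" "Q = ?K x" by auto
    show "Q \<in> (?K2 ` X - {?K2 a}) \<union> {?K a, ?K b}"
    proof (cases "?K x = ?K a \<or> ?K x = ?K b")
      case True then show ?thesis using x by auto
    next
      case False
      then have e: "?K2 x = ?K x" using keep by blast
      have "?K2 x \<noteq> ?K2 a"
      proof
        assume "?K2 x = ?K2 a"
        then have "a \<in> ?K x" using e by auto
        then have "?K x = ?K a" using rtrancl_class_eq[OF sR, of x a] by simp
        then show False using False by simp
      qed
      then show ?thesis using x e by auto
    qed
  qed
  have "card (?K ` X) \<le> card ((?K2 ` X - {?K2 a}) \<union> {?K a, ?K b})"
    by (rule card_mono[OF _ sub]) (simp add: fin)
  also have "\<dots> \<le> card (?K2 ` X - {?K2 a}) + card {?K a, ?K b}"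
    by (rule card_Un_le)
  also have "\<dots> \<le> card (?K2 ` X - {?K2 a}) + 2"
    by (simp add: card_insert_le_m1)
  also have "card (?K2 ` X - {?K2 a}) = card (?K2 ` X) - 1"
    using aX by (simp add: card_Diff_singleton)
  finally have "card (?K ` X) \<le> card (?K2 ` X) - 1 + 2" .
  moreover have "?K2 ` X \<noteq> {}" using aX by auto
  then have "card (?K2 ` X) \<ge> 1" using fin by (simp add: Suc_le_eq card_gt_0_iff)
  ultimately show ?thesis unfolding ncl_def by linarith
qed

lemma chain:
  assumes "finite X" "bij_betw g X X"
  shows "inv_on t X \<Longrightarrow> 2 * zc (g \<circ> t) X \<le> 2 * zc g X + card (mv t X) \<and>
    (2 * zc (g \<circ> t) X = 2 * zc g X + card (mv t X) \<longrightarrow> (\<forall>x\<in>X. t x \<in> dorbit g x))"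
proof (induction "card (mv t X)" arbitrary: t rule: less_induct)
  case less
  have gX: "\<And>x. x \<in> X \<Longrightarrow> g x \<in> X" using assms(2) by (auto simp: bij_betw_def)
  have tX: "\<And>x. x \<in> X \<Longrightarrow> t x \<in> X" using less.prems by (auto simp: inv_on_def)
  show ?case
  proof (cases "mv t X = {}")
    case True
    then have tid: "\<And>x. x \<in> X \<Longrightarrow> t x = x" unfolding mv_def by auto
    have "zc (g \<circ> t) X = zc g X" using tid gX by (intro zc_cong) auto
    then show ?thesis using True tid dorbit_self by auto
  next
    case False
    then obtain a where a: "a \<in> mv t X" by auto
    define b where "b = t a"
    define t0 where "t0 = (\<lambda>x. if x = a \<or> x = b then x else t x)"
    note D = inv_decomp[OF assms(1) less.prems a, folded b_def, folded t0_def]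
    let ?k = "g \<circ> t0"
    have kb: "bij_betw ?k X X" using bij_betw_trans[OF inv_bij[OF D(1)] assms(2)] .
    have IH: "2 * zc ?k X \<le> 2 * zc g X + card (mv t0 X) \<and>
      (2 * zc ?k X = 2 * zc g X + card (mv t0 X) \<longrightarrow> (\<forall>x\<in>X. t0 x \<in> dorbit g x))"
      using less.hyps[of t0] D(1,3) by simp
    have pw: "\<And>z. z \<in> X \<Longrightarrow> (g \<circ> t) z = (?k \<circ> sw a b) z"
      using D(4) by (simp add: t0_def)
    have img: "(g \<circ> t) ` X \<subseteq> X" using gX tX by auto
    have e: "zc (g \<circ> t) X = zc (?k \<circ> sw a b) X" using zc_cong[OF img pw] .
    have U: "zc (?k \<circ> sw a b) X \<le> zc ?k X + 1" by (rule transp_U[OF assms(1) kb D(5,6)])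
    have ineq: "2 * zc (g \<circ> t) X \<le> 2 * zc g X + card (mv t X)" using e U IH D(3) by linarith
    moreover have "\<forall>x\<in>X. t x \<in> dorbit g x"
      if eq: "2 * zc (g \<circ> t) X = 2 * zc g X + card (mv t X)"
    proof -
      have eq0: "2 * zc ?k X = 2 * zc g X + card (mv t0 X)" using eq e U IH D(3) by linarith
      have s: "zc (?k \<circ> sw a b) X = zc ?k X + 1" using eq e U IH D(3) by linarith
      have bk: "b \<in> dorbit ?k a"
      proof (rule ccontr)
        assume "b \<notin> dorbit ?k a"
        from transp_M[OF assms(1) kb D(5,6) this] s show False by simp
      qed
      have t0g: "\<forall>x\<in>X. t0 x \<in> dorbit g x" using IH eq0 by blast
      have "dorbit ?k a \<subseteq> dorbit g a"
      proof (rule dorbit_closed)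
        fix z assume z: "z \<in> dorbit g a"
        have zX: "z \<in> X" using dorbit_subset[of g X a] gX D(5) z by auto
        have "t0 z \<in> dorbit g z" using t0g zX by blast
        then have "t0 z \<in> dorbit g a" using dorbit_eq[OF assms(1,2) D(5) z] by simp
        then show "?k z \<in> dorbit g a" using dorbit_step by simp
      qed (rule dorbit_self)
      then have bg: "b \<in> dorbit g a" using bk by blast
      show ?thesis
      proof
        fix x assume x: "x \<in> X"
        show "t x \<in> dorbit g x"
        proof (cases "x = a \<or> x = b")
          case True
          then show ?thesis
          proof
            assume "x = a" then show ?thesis using bg b_def by simp
          next
            assume "x = b" then show ?thesis
              using dorbit_sym[OF assms(1,2) D(5) bg] D(8) by simp
          qed
        next
          case False
          then show ?thesis using t0g x unfolding t0_def by auto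
        qed
      qed
    qed
    ultimately show ?thesis by blast
  qed
qed

definition tg :: "('a \<Rightarrow> 'a) \<Rightarrow> 'a set \<Rightarrow> ('a \<times> 'a) set" where
  "tg t X = {(x, t x) | x. x \<in> X \<and> t x \<noteq> x}"

lemma sym_tg: "inv_on t X \<Longrightarrow> sym (tg t X)"
  unfolding sym_def tg_def inv_on_def by auto

lemma block:
  assumes "finite X" "bij_betw f X X" "sym R" "\<forall>x\<in>X. (x, f x) \<in> R\<^sup>*"
  shows "inv_on t X \<Longrightarrow> 2 * zc (f \<circ> t) X + 4 * ncl R X \<le> 2 * zc f X + card (mv t X) + 4 * ncl (R \<union> tg t X) X"
proof (induction "card (mv t X)" arbitrary: t rule: less_induct)
  case less
  have fX: "\<And>x. x \<in> X \<Longrightarrow> f x \<in> X" using assms(2) by (auto simp: bij_betw_def)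
  have tX: "\<And>x. x \<in> X \<Longrightarrow> t x \<in> X" using less.prems by (auto simp: inv_on_def)
  show ?case
  proof (cases "mv t X = {}")
    case True
    then have tid: "\<And>x. x \<in> X \<Longrightarrow> t x = x" unfolding mv_def by auto
    have "zc (f \<circ> t) X = zc f X" using tid fX by (intro zc_cong) auto
    moreover have "tg t X = {}" using tid unfolding tg_def by auto
    ultimately show ?thesis by simp
  next
    case False
    then obtain a where a: "a \<in> mv t X" by auto
    define b where "b = t a"
    define t0 where "t0 = (\<lambda>x. if x = a \<or> x = b then x else t x)"
    note D = inv_decomp[OF assms(1) less.prems a, folded b_def, folded t0_def]
    let ?k = "f \<circ> t0"
    let ?R1 = "R \<union> tg t0 X"
    have kb: "bij_betw ?k X X" using bij_betw_trans[OF inv_bij[OF D(1)] assms(2)] .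
    have IH: "2 * zc ?k X + 4 * ncl R X \<le> 2 * zc f X + card (mv t0 X) + 4 * ncl ?R1 X"
      using less.hyps[of t0] D(1,3) by simp
    have pw: "\<And>z. z \<in> X \<Longrightarrow> (f \<circ> t) z = (?k \<circ> sw a b) z"
      using D(4) by (simp add: t0_def)
    have img: "(f \<circ> t) ` X \<subseteq> X" using fX tX by auto
    have e: "zc (f \<circ> t) X = zc (?k \<circ> sw a b) X" using zc_cong[OF img pw] .
    have tgeq: "tg t X = tg t0 X \<union> {(a, b), (b, a)}"
    proof (rule set_eqI)
      fix p
      show "p \<in> tg t X \<longleftrightarrow> p \<in> tg t0 X \<union> {(a, b), (b, a)}"
      proof
        assume "p \<in> tg t X"
        then obtain x where x: "p = (x, t x)" "x \<in> X" "t x \<noteq> x" unfolding tg_def by blast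
        show "p \<in> tg t0 X \<union> {(a, b), (b, a)}"
        proof (cases "x = a \<or> x = b")
          case True then show ?thesis using x D(8) b_def by auto
        next
          case False
          then have "t0 x = t x" unfolding t0_def by simp
          then have "p \<in> tg t0 X" using x unfolding tg_def by force
          then show ?thesis by simp
        qed
      next
        assume "p \<in> tg t0 X \<union> {(a, b), (b, a)}"
        then show "p \<in> tg t X"
        proof
          assume "p \<in> tg t0 X"
          then obtain x where x: "p = (x, t0 x)" "x \<in> X" "t0 x \<noteq> x" unfolding tg_def by blast
          then have "\<not> (x = a \<or> x = b)" unfolding t0_def by auto
          then have "t0 x = t x" unfolding t0_def by simp
          then show "p \<in> tg t X" using x unfolding tg_def by force
        next
          assume "p \<in> {(a, b), (b, a)}"
          then show "p \<in> tg t X" using D(5,6,7,8) b_def unfolding tg_def by force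
        qed
      qed
    qed
    have R2: "R \<union> tg t X = ?R1 \<union> {(a, b), (b, a)}" using tgeq by auto
    have sR1: "sym ?R1" using assms(3) sym_tg[OF D(1)] by (simp add: sym_Un)
    show ?thesis
    proof (cases "(a, b) \<in> ?R1\<^sup>*")
      case True
      have "(b, a) \<in> ?R1\<^sup>*" using True sym_rtrancl[OF sR1] unfolding sym_def by blast
      then have "(?R1 \<union> {(a, b), (b, a)})\<^sup>* = ?R1\<^sup>*"
        using True by (intro rtrancl_subset) auto
      then have "ncl (R \<union> tg t X) X = ncl ?R1 X" unfolding ncl_def R2 by simp
      moreover have "zc (?k \<circ> sw a b) X \<le> zc ?k X + 1" by (rule transp_U[OF assms(1) kb D(5,6)])
      ultimately show ?thesis using IH e D(3) by linarith
    next
      case False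
      have "dorbit ?k a \<subseteq> ?R1\<^sup>* `` {a} \<inter> X"
      proof (rule dorbit_closed)
        fix z assume z: "z \<in> ?R1\<^sup>* `` {a} \<inter> X"
        have t0X: "t0 z \<in> X" using D(1) z unfolding inv_on_def by auto
        have "(z, t0 z) \<in> ?R1\<^sup>*"
        proof (cases "t0 z = z")
          case True then show ?thesis by simp
        next
          case False then have "(z, t0 z) \<in> tg t0 X" using z unfolding tg_def by auto
          then show ?thesis by auto
        qed
        moreover have "(t0 z, f (t0 z)) \<in> R\<^sup>*" using assms(4) t0X by blast
        then have "(t0 z, f (t0 z)) \<in> ?R1\<^sup>*" using rtrancl_mono[of R ?R1] by blast
        moreover have "(a, z) \<in> ?R1\<^sup>*" using z by blast
        ultimately have "(a, ?k z) \<in> ?R1\<^sup>*" by (simp add: rtrancl_trans)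
        then show "?k z \<in> ?R1\<^sup>* `` {a} \<inter> X" using fX t0X by simp
      qed (simp add: D(5))
      then have "b \<notin> dorbit ?k a" using False by auto
      then have M: "zc (?k \<circ> sw a b) X + 1 \<le> zc ?k X" by (rule transp_M[OF assms(1) kb D(5,6)])
      have J: "ncl ?R1 X \<le> ncl (R \<union> tg t X) X + 1"
        unfolding R2 by (rule join_card[OF assms(1) sR1 D(5,6)])
      show ?thesis using IH e D(3) M J by linarith
    qed
  qed
qed

lemma even_inv:
  "finite J \<Longrightarrow> (\<forall>x\<in>J. t x \<in> J \<and> t (t x) = x \<and> t x \<noteq> x) \<Longrightarrow> even (card J)"
proof (induction "card J" arbitrary: J rule: less_induct)
  case less
  show ?case
  proof (cases "J = {}")
    case True then show ?thesis by simp
  next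
    case False
    then obtain x where x: "x \<in> J" by auto
    let ?J = "J - {x, t x}"
    have tx: "t x \<in> J" "t x \<noteq> x" using less.prems x by auto
    have c: "card ?J + 2 = card J"
    proof -
      have "card ?J = card J - 2" using tx x less.prems(1) by (simp add: card_Diff_subset)
      moreover have "card J \<ge> 2" using card_mono[OF less.prems(1), of "{x, t x}"] tx x by auto
      ultimately show ?thesis by simp
    qed
    have "\<forall>y\<in>?J. t y \<in> ?J \<and> t (t y) = y \<and> t y \<noteq> y"
    proof
      fix y assume y: "y \<in> ?J"
      have P: "t y \<in> J" "t (t y) = y" "t y \<noteq> y" using less.prems(2) y by auto
      have "t y \<noteq> x"
      proof
        assume "t y = x" then have "y = t x" using P(2) by simp
        then show False using y by simp
      qed
      moreover have "t y \<noteq> t x"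
      proof
        assume "t y = t x" then have "t (t y) = t (t x)" by simp
        then have "y = x" using P(2) less.prems(2) x by simp
        then show False using y by simp
      qed
      ultimately show "t y \<in> ?J \<and> t (t y) = y \<and> t y \<noteq> y" using P by simp
    qed
    then have "even (card ?J)" using less.hyps[of ?J] c less.prems(1) by simp
    then show ?thesis using c[symmetric] by simp
  qed
qed



definition retT :: "('a \<Rightarrow> 'a) \<Rightarrow> 'a set \<Rightarrow> 'a \<Rightarrow> nat" where
  "retT f S x = (LEAST k. 0 < k \<and> (f ^^ k) x \<in> S)"

definition fr :: "('a \<Rightarrow> 'a) \<Rightarrow> 'a set \<Rightarrow> 'a \<Rightarrow> 'a" where
  "fr f S x = (f ^^ retT f S x) x"

lemma fr_props:
  assumes "finite X" "bij_betw f X X" "S \<subseteq> X" "x \<in> S"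
  shows "0 < retT f S x" "fr f S x \<in> S" "\<And>i. 0 < i \<Longrightarrow> i < retT f S x \<Longrightarrow> (f ^^ i) x \<notin> S"
    "fr f S x \<in> dorbit f x"
    "\<And>k. 0 < k \<Longrightarrow> (f ^^ k) x \<in> S \<Longrightarrow> retT f S x \<le> k"
proof -
  obtain p where p: "p > 0" "(f ^^ p) x = x" using perm_return[OF assms(1,2)] assms(3,4) by blast
  then have ex: "0 < p \<and> (f ^^ p) x \<in> S" using assms(4) by simp
  have L: "0 < retT f S x \<and> (f ^^ retT f S x) x \<in> S"
    unfolding retT_def by (rule LeastI[of "\<lambda>k. 0 < k \<and> (f ^^ k) x \<in> S", OF ex])
  then show "0 < retT f S x" "fr f S x \<in> S" unfolding fr_def by auto
  show "\<And>i. 0 < i \<Longrightarrow> i < retT f S x \<Longrightarrow> (f ^^ i) x \<notin> S"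
    unfolding retT_def using not_less_Least by blast
  show "fr f S x \<in> dorbit f x" unfolding fr_def by (rule dorbit_funpow)
  show "\<And>k. 0 < k \<Longrightarrow> (f ^^ k) x \<in> S \<Longrightarrow> retT f S x \<le> k"
    unfolding retT_def by (simp add: Least_le)
qed

lemma fr_orbit:
  assumes "finite X" "bij_betw f X X" "S \<subseteq> X" "x \<in> S"
  shows "dorbit (fr f S) x = dorbit f x \<inter> S"
proof
  show "dorbit (fr f S) x \<subseteq> dorbit f x \<inter> S"
  proof (rule dorbit_closed)
    fix z assume z: "z \<in> dorbit f x \<inter> S"
    then have "fr f S z \<in> S" "fr f S z \<in> dorbit f z" using fr_props[OF assms(1-3)] by auto
    then show "fr f S z \<in> dorbit f x \<inter> S" using dorbit_trans[of z f x] z by blast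
  qed (simp add: assms(4) dorbit_self)
  show "dorbit f x \<inter> S \<subseteq> dorbit (fr f S) x"
  proof
    fix y assume y: "y \<in> dorbit f x \<inter> S"
    then obtain k where k: "y = (f ^^ k) x" unfolding dorbit_def by auto
    have "\<And>x. x \<in> S \<Longrightarrow> (f ^^ k) x \<in> S \<Longrightarrow> (f ^^ k) x \<in> dorbit (fr f S) x"
    proof (induction k rule: less_induct)
      case (less k)
      show ?case
      proof (cases "k = 0")
        case True then show ?thesis using dorbit_self by simp
      next
        case False
        note P = fr_props[OF assms(1-3) less.prems(1)]
        let ?T = "retT f S x"
        have Tk: "?T \<le> k" using P(5) False less.prems(2) by simp
        have kk: "k = (k - ?T) + ?T" using Tk by simp
        have "(f ^^ ((k - ?T) + ?T)) x = (f ^^ (k - ?T)) ((f ^^ ?T) x)" by (simp add: funpow_add)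
        then have eq: "(f ^^ k) x = (f ^^ (k - ?T)) (fr f S x)"
          unfolding fr_def using kk by simp
        have st: "fr f S x \<in> dorbit (fr f S) x" by (rule dorbit_step[OF dorbit_self])
        show ?thesis
        proof (cases "?T = k")
          case True
          then have "(f ^^ k) x = fr f S x" using eq by simp
          then show ?thesis using st by simp
        next
          case False
          have "k - ?T < k" using Tk False P(1) by simp
          moreover have "(f ^^ (k - ?T)) (fr f S x) \<in> S" using less.prems(2) eq by simp
          ultimately have "(f ^^ (k - ?T)) (fr f S x) \<in> dorbit (fr f S) (fr f S x)"
            using less.IH[of "k - ?T" "fr f S x"] P(2) by blast
          then have "(f ^^ k) x \<in> dorbit (fr f S) (fr f S x)" using eq by simp
          then show ?thesis using dorbit_trans[OF st] by blast
        qed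
      qed
    qed
    then have "(f ^^ k) x \<in> dorbit (fr f S) x" using k y assms(4) by blast
    then show "y \<in> dorbit (fr f S) x" using k by simp
  qed
qed

lemma fr_count:
  assumes "finite X" "bij_betw f X X" "S \<subseteq> X"
  shows "zc (fr f S) S = card {Q \<in> dorbit f ` X. Q \<inter> S \<noteq> {}}"
proof -
  let ?A = "{Q \<in> dorbit f ` X. Q \<inter> S \<noteq> {}}"
  have img: "dorbit (fr f S) ` S = (\<lambda>Q. Q \<inter> S) ` ?A"
  proof
    show "dorbit (fr f S) ` S \<subseteq> (\<lambda>Q. Q \<inter> S) ` ?A"
    proof
      fix Q assume "Q \<in> dorbit (fr f S) ` S"
      then obtain x where x: "x \<in> S" "Q = dorbit (fr f S) x" by auto
      then have "Q = dorbit f x \<inter> S" using fr_orbit[OF assms] by simp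
      moreover have "dorbit f x \<in> ?A" using x assms(3) dorbit_self[of x f] by auto
      ultimately show "Q \<in> (\<lambda>Q. Q \<inter> S) ` ?A" by blast
    qed
    show "(\<lambda>Q. Q \<inter> S) ` ?A \<subseteq> dorbit (fr f S) ` S"
    proof
      fix Q assume "Q \<in> (\<lambda>Q. Q \<inter> S) ` ?A"
      then obtain y z where yz: "y \<in> X" "Q = dorbit f y \<inter> S" "z \<in> dorbit f y \<inter> S" by auto
      then have "dorbit f z = dorbit f y" using dorbit_eq[OF assms(1,2)] by blast
      then have "Q = dorbit (fr f S) z" using fr_orbit[OF assms, of z] yz by auto
      then show "Q \<in> dorbit (fr f S) ` S" using yz by auto
    qed
  qed
  have inj: "inj_on (\<lambda>Q. Q \<inter> S) ?A"
  proof (rule inj_onI)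
    fix P Q assume P: "P \<in> ?A" and Q: "Q \<in> ?A" and e: "P \<inter> S = Q \<inter> S"
    from P obtain y where y: "y \<in> X" "P = dorbit f y" by auto
    from Q obtain y' where y': "y' \<in> X" "Q = dorbit f y'" by auto
    from P obtain z where z: "z \<in> P \<inter> S" by auto
    have "dorbit f z = P" using dorbit_eq[OF assms(1,2) y(1)] z y by auto
    moreover have "dorbit f z = Q" using dorbit_eq[OF assms(1,2) y'(1)] z y' e by auto
    ultimately show "P = Q" by simp
  qed
  show ?thesis unfolding zc_def img using card_image[OF inj] by simp
qed

lemma reversal:
  assumes fin: "finite X"
    and al: "\<forall>x\<in>X. a x \<in> X \<and> a (a x) = x"
    and sb: "bij_betw s X X" and SX: "S \<subseteq> X"
    and sS: "\<forall>x\<in>S. s x \<in> S"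
    and sN: "\<forall>x\<in>X - S. s x \<in> X - S \<and> s (s x) = x"
    and x: "x \<in> S" and e: "e \<in> S" and se: "s e = fr (s \<circ> a) S x"
  shows "fr (s \<circ> a) S e = s x"
proof -
  define p where "p = s \<circ> a"
  have p_ap: "\<And>y. p y = s (a y)" by (simp add: p_def)
  have se': "s e = fr p S x" using se p_def by simp
  have ab: "bij_betw a X X" using inv_bij al unfolding inv_on_def by blast
  have pb: "bij_betw p X X" unfolding p_def using bij_betw_trans[OF ab sb] .
  have pX: "\<And>y. y \<in> X \<Longrightarrow> p y \<in> X" using pb by (auto simp: bij_betw_def)
  have xsX: "\<And>i. (p ^^ i) x \<in> X" using bij_funpow_inj[OF pb] x SX by blast
  note P = fr_props[OF fin pb SX x]
  define T where "T = retT p S x"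
  have T0: "0 < T" using P(1) T_def by simp
  have notS: "\<And>i. 0 < i \<Longrightarrow> i < T \<Longrightarrow> (p ^^ i) x \<notin> S" using P(3) T_def by simp
  have xT: "(p ^^ T) x = fr p S x" unfolding fr_def T_def by simp
  obtain T' where T': "T = Suc T'" using T0 by (cases T) auto
  have "(p ^^ T) x = s (a ((p ^^ T') x))" using T' p_ap[of "(p ^^ T') x"] by simp
  then have "s (a ((p ^^ T') x)) = s e" using xT se' by simp
  moreover have "a ((p ^^ T') x) \<in> X" using al xsX by blast
  moreover have "inj_on s X" using sb by (simp add: bij_betw_def)
  ultimately have ae: "a ((p ^^ T') x) = e" using e SX by (auto simp: inj_on_def)
  have claim: "(p ^^ i) e = s ((p ^^ (T - i)) x)" if "1 \<le> i" "i \<le> T" for i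
    using that
  proof (induction i rule: nat_induct_at_least)
    case base
    have "a e = a (a ((p ^^ T') x))" using ae by simp
    also have "\<dots> = (p ^^ T') x" using al xsX by blast
    finally have "a e = (p ^^ T') x" .
    moreover have "(p ^^ 1) e = s (a e)" using p_ap[of e] by simp
    ultimately show ?case using T' by simp
  next
    case (Suc i)
    have "T - i > 0" using Suc.prems by simp
    then obtain j where j: "T - i = Suc j" by (cases "T - i") auto
    have jT: "T - Suc i = j" using j by simp
    have IH: "(p ^^ i) e = s ((p ^^ Suc j) x)" using Suc.IH Suc.prems j by simp
    have ns: "(p ^^ Suc j) x \<notin> S" using notS[of "Suc j"] j Suc.hyps Suc.prems by simp
    have eq: "(p ^^ Suc j) x = s (a ((p ^^ j) x))" using p_ap[of "(p ^^ j) x"] by simp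
    have ajX: "a ((p ^^ j) x) \<in> X" using al xsX by blast
    have ajS: "a ((p ^^ j) x) \<notin> S" using sS ns eq by auto
    have "s ((p ^^ Suc j) x) = a ((p ^^ j) x)" using sN ajX ajS eq by simp
    then have "(p ^^ Suc i) e = s (a (a ((p ^^ j) x)))" using IH p_ap[of "(p ^^ i) e"] by simp
    also have "\<dots> = s ((p ^^ j) x)" using al xsX by simp
    finally show ?case using jT by simp
  qed
  have eT: "(p ^^ T) e = s x" using claim[of T] T0 by simp
  have eNS: "(p ^^ i) e \<notin> S" if "0 < i" "i < T" for i
  proof -
    have "(p ^^ i) e = s ((p ^^ (T - i)) x)" using claim that by simp
    moreover have "(p ^^ (T - i)) x \<in> X - S" using notS[of "T - i"] that xsX by simp
    ultimately show ?thesis using sN by auto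
  qed
  have "retT p S e = T"
    unfolding retT_def
  proof (rule Least_equality)
    show "0 < T \<and> (p ^^ T) e \<in> S" using T0 eT sS x by simp
    show "\<And>k. 0 < k \<and> (p ^^ k) e \<in> S \<Longrightarrow> T \<le> k" using eNS by (meson not_le)
  qed
  then have "fr p S e = s x" unfolding fr_def using eT by simp
  then show ?thesis unfolding p_def .
qed



lemma Inr_mem_img[simp]: "(Inr j \<in> Inr ` A) = (j \<in> A)" by auto
lemma Inl_nmem_Inr[simp]: "Inl d \<notin> Inr ` A" by auto
lemma Inl_mem_img[simp]: "(Inl d \<in> Inl ` A) = (d \<in> A)" by auto
lemma Inr_nmem_Inl[simp]: "Inr d \<notin> Inl ` A" by auto

lemma tdarts_Inl[simp]: "Inl d \<in> tdarts n C \<longleftrightarrow> d \<in> C"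
  unfolding tdarts_def by auto
lemma tdarts_Inr[simp]: "Inr j \<in> tdarts n C \<longleftrightarrow> j \<in> {1..2*n}"
  unfolding tdarts_def by auto

locale tw =
  fixes n :: nat and C :: "'d set" and sg :: "'d \<Rightarrow> 'd" and Ov :: "'d set"
    and al :: "'d + nat \<Rightarrow> 'd + nat" and W :: "'d set"
  assumes td: "tangle_diagram n C sg Ov al"
    and WC: "W \<subseteq> C"
    and W2: "\<And>d. d \<in> C \<Longrightarrow> d \<in> W \<longleftrightarrow> sg (sg d) \<in> W"
    and W1: "\<And>d. d \<in> C \<Longrightarrow> d \<in> W \<longleftrightarrow> sg d \<notin> W"
    and npos: "1 \<le> n"
begin

abbreviation "X \<equiv> tdarts n C"
abbreviation "S \<equiv> (Inr ` {1..2*n} :: ('d + nat) set)"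

lemma finC: "finite C" using td unfolding tangle_diagram_def by simp
lemma sgb: "bij_betw sg C C" using td unfolding tangle_diagram_def by simp
lemma sgC: "d \<in> C \<Longrightarrow> sg d \<in> C" using sgb by (auto simp: bij_betw_def)
lemma sg_inj: "d \<in> C \<Longrightarrow> e \<in> C \<Longrightarrow> sg d = sg e \<Longrightarrow> d = e"
  using sgb by (auto simp: bij_betw_def inj_on_def)
lemma OvC: "Ov \<subseteq> C" using td unfolding tangle_diagram_def by simp
lemma cprops: "d \<in> C \<Longrightarrow> (sg ^^ 4) d = d \<and> sg (sg d) \<noteq> d \<and>
             (d \<in> Ov \<longleftrightarrow> sg (sg d) \<in> Ov) \<and> (d \<in> Ov \<longleftrightarrow> sg d \<notin> Ov)"
  using td unfolding tangle_diagram_def by blast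
lemma edge: "h \<in> X \<Longrightarrow> al h \<in> X \<and> al h \<noteq> h \<and> al (al h) = h"
  using td unfolding tangle_diagram_def edge_involution_def by blast
lemma planar: "planar_map X al (cap_rot n sg)"
  using td unfolding tangle_diagram_def by blast

lemma finX: "finite X" unfolding tdarts_def using finC by simp
lemma alX: "h \<in> X \<Longrightarrow> al h \<in> X" using edge by blast
lemma alal: "h \<in> X \<Longrightarrow> al (al h) = h" using edge by blast
lemma al_inv: "inv_on al X" unfolding inv_on_def using edge by blast

lemma sg_ne: "d \<in> C \<Longrightarrow> sg d \<noteq> d" using cprops by fastforce
lemma sg4: "d \<in> C \<Longrightarrow> sg (sg (sg (sg d))) = d"
  using cprops[of d] by (simp add: numeral_eq_Suc)

definition "sinv = inv_into C sg"
lemma sinvC: "d \<in> C \<Longrightarrow> sinv d \<in> C"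
  unfolding sinv_def using sgb by (metis bij_betw_def inv_into_into)
lemma sg_sinv: "d \<in> C \<Longrightarrow> sg (sinv d) = d"
  unfolding sinv_def using sgb by (metis bij_betw_def f_inv_into_f)
lemma sinv_sg: "d \<in> C \<Longrightarrow> sinv (sg d) = d"
  unfolding sinv_def using sgb by (metis bij_betw_def inv_into_f_f)

definition "sm d = (if d \<in> W then sinv d else sg d)"
lemma smC: "d \<in> C \<Longrightarrow> sm d \<in> C" unfolding sm_def using sinvC sgC by auto
lemma smsm: "d \<in> C \<Longrightarrow> sm (sm d) = d"
proof -
  assume d: "d \<in> C"
  show ?thesis
  proof (cases "d \<in> W")
    case True
    have "sinv d \<notin> W" using W1[OF sinvC[OF d]] sg_sinv[OF d] True by simp
    then show ?thesis using True unfolding sm_def by (simp add: sg_sinv d)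
  next
    case False
    have "sg d \<in> W" using W1[OF d] False by simp
    then show ?thesis using False unfolding sm_def by (simp add: sinv_sg d)
  qed
qed

definition "cs = cap_rot n sg"
lemma cs_Inl[simp]: "cs (Inl d) = Inl (sg d)" unfolding cs_def cap_rot_def by simp
lemma cs_Inr[simp]: "cs (Inr j) = Inr (if j = 2*n then 1 else Suc j)" unfolding cs_def cap_rot_def by simp

definition "cinv x = (case x of Inl d \<Rightarrow> Inl d | Inr j \<Rightarrow> Inr (if j = 1 then 2*n else j - 1))"
lemma cinv_Inr[simp]: "cinv (Inr j) = Inr (if j = 1 then 2*n else j - 1)" unfolding cinv_def by simp

lemma csS: "x \<in> S \<Longrightarrow> cs x \<in> S" using npos by auto
lemma cinvS: "x \<in> S \<Longrightarrow> cinv x \<in> S" using npos by auto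
lemma cinv_cs: "x \<in> S \<Longrightarrow> cinv (cs x) = x" using npos by auto
lemma cs_cinv: "x \<in> S \<Longrightarrow> cs (cinv x) = x" using npos by auto

lemma csb: "bij_betw cs S S"
proof (rule bij_betw_byWitness[where f' = cinv])
  show "\<forall>a\<in>S. cinv (cs a) = a" using cinv_cs by blast
  show "\<forall>a\<in>S. cs (cinv a) = a" using cs_cinv by blast
  show "cs ` S \<subseteq> S" using csS by blast
  show "cinv ` S \<subseteq> S" using cinvS by blast
qed

lemma cs_iter: "1 \<le> j \<Longrightarrow> j + k \<le> 2*n \<Longrightarrow> (cs ^^ k) (Inr j) = Inr (j + k)"
  by (induction k) auto

lemma cs_orbit: "x \<in> S \<Longrightarrow> dorbit cs x = S"
proof
  assume x: "x \<in> S"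
  show "dorbit cs x \<subseteq> S" using dorbit_closed[of S cs x] csS x by blast
  obtain j where j: "x = Inr j" "1 \<le> j" "j \<le> 2*n" using x by auto
  have "(cs ^^ (2*n - j)) (Inr j) = Inr (2*n)" using cs_iter[of j "2*n - j"] j by simp
  then have "Inr (2*n) \<in> dorbit cs x" using dorbit_funpow j by metis
  then have one: "Inr 1 \<in> dorbit cs x" using dorbit_step[of "Inr (2*n)" cs x] by simp
  show "S \<subseteq> dorbit cs x"
  proof
    fix y assume "y \<in> S"
    then obtain i where i: "y = Inr i" "1 \<le> i" "i \<le> 2*n" by auto
    have "(cs ^^ (i - 1)) (Inr 1) = Inr i" using cs_iter[of 1 "i - 1"] i by simp
    then have "y \<in> dorbit cs (Inr 1)" using dorbit_funpow i by metis
    then show "y \<in> dorbit cs x" using dorbit_trans[OF one] by blast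
  qed
qed

lemma zc_cs: "zc cs S = 1"
proof -
  have "dorbit cs ` S = {S}" using cs_orbit npos by force
  then show ?thesis unfolding zc_def by simp
qed

definition "sig' x = (case x of Inl d \<Rightarrow> Inl (sm d) | Inr j \<Rightarrow> cs (Inr j))"
lemma sig'_Inl[simp]: "sig' (Inl d) = Inl (sm d)" unfolding sig'_def by simp
lemma sig'_Inr[simp]: "sig' (Inr j) = cs (Inr j)" unfolding sig'_def by simp

definition "sig'i x = (case x of Inl d \<Rightarrow> Inl (sm d) | Inr j \<Rightarrow> cinv (Inr j))"

lemma sig'X: "x \<in> X \<Longrightarrow> sig' x \<in> X"
  by (cases x) (auto simp: smC simp del: cs_Inr, use csS in auto)

lemma sig'b: "bij_betw sig' X X"
proof (rule bij_betw_byWitness[where f' = sig'i])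
  show "\<forall>a\<in>X. sig'i (sig' a) = a"
  proof
    fix a assume a: "a \<in> X"
    show "sig'i (sig' a) = a"
    proof (cases a)
      case (Inl d) then show ?thesis using a by (simp add: sig'i_def smsm)
    next
      case (Inr j)
      then have "a \<in> S" using a by auto
      then show ?thesis using Inr cinv_cs[of a] by (simp add: sig'i_def)
    qed
  qed
  show "\<forall>a\<in>X. sig' (sig'i a) = a"
  proof
    fix a assume a: "a \<in> X"
    show "sig' (sig'i a) = a"
    proof (cases a)
      case (Inl d) then show ?thesis using a by (simp add: sig'i_def smsm)
    next
      case (Inr j)
      then have "a \<in> S" using a by auto
      moreover have "cinv a \<in> S" using calculation cinvS by blast
      ultimately show ?thesis using Inr cs_cinv[of a] by (auto simp add: sig'i_def simp del: cs_Inr cinv_Inr)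
    qed
  qed
  show "sig' ` X \<subseteq> X" using sig'X by auto
  show "sig'i ` X \<subseteq> X"
  proof
    fix y assume "y \<in> sig'i ` X"
    then obtain a where a: "a \<in> X" "y = sig'i a" by auto
    show "y \<in> X"
    proof (cases a)
      case (Inl d) then show ?thesis using a by (simp add: sig'i_def smC)
    next
      case (Inr j)
      then have "a \<in> S" using a by auto
      then have "cinv a \<in> S" using cinvS by blast
      then show ?thesis using a Inr by (auto simp add: sig'i_def simp del: cinv_Inr)
    qed
  qed
qed

lemma XS: "X - S = Inl ` C" unfolding tdarts_def by auto
lemma SX: "S \<subseteq> X" unfolding tdarts_def by auto

lemma sig'S: "x \<in> S \<Longrightarrow> sig' x \<in> S" using csS by auto
lemma sig'N: "x \<in> X - S \<Longrightarrow> sig' x \<in> X - S \<and> sig' (sig' x) = x"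
proof -
  assume "x \<in> X - S"
  then have "x \<in> Inl ` C" unfolding XS .
  then obtain d where "x = Inl d" "d \<in> C" by blast
  then show ?thesis using smC smsm by simp
qed

definition "phi' = sig' \<circ> al"
lemma phi'_ap: "phi' x = sig' (al x)" unfolding phi'_def by simp
lemma phi'b: "bij_betw phi' X X"
  unfolding phi'_def using bij_betw_trans[OF inv_bij[OF al_inv] sig'b] .

end



lemma ncl_le:
  assumes "finite X" "M \<subseteq> Q\<^sup>*"
  shows "ncl Q X \<le> card ((\<lambda>h. M\<^sup>* `` {h}) ` X)"
proof -
  have MQ: "M\<^sup>* \<subseteq> Q\<^sup>*" using assms(2) by (rule rtrancl_subset_rtrancl)
  have e: "Q\<^sup>* `` (M\<^sup>* `` {x}) = Q\<^sup>* `` {x}" for x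
  proof
    show "Q\<^sup>* `` (M\<^sup>* `` {x}) \<subseteq> Q\<^sup>* `` {x}" using MQ by (auto intro: rtrancl_trans)
    show "Q\<^sup>* `` {x} \<subseteq> Q\<^sup>* `` (M\<^sup>* `` {x})" by auto
  qed
  have "(\<lambda>x. Q\<^sup>* `` {x}) ` X = (\<lambda>K. Q\<^sup>* `` K) ` ((\<lambda>h. M\<^sup>* `` {h}) ` X)"
    unfolding image_image e ..
  then show ?thesis unfolding ncl_def using card_image_le assms(1) by (metis finite_imageI)
qed

context tw begin

definition "tau x = (case x of Inl d \<Rightarrow> (if d \<in> W then Inl (sg (sg d)) else Inl d) | Inr j \<Rightarrow> Inr j)"
lemma tau_Inr[simp]: "tau (Inr j) = Inr j" unfolding tau_def by simp
lemma tau_Inl: "tau (Inl d) = (if d \<in> W then Inl (sg (sg d)) else Inl d)" unfolding tau_def by simp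

lemma tauX: "x \<in> X \<Longrightarrow> tau x \<in> X"
  by (cases x) (auto simp: tau_Inl sgC)

lemma tau_inv: "inv_on tau X"
  unfolding inv_on_def
proof
  fix x assume x: "x \<in> X"
  show "tau x \<in> X \<and> tau (tau x) = x"
  proof (cases x)
    case (Inl d)
    then have d: "d \<in> C" using x by simp
    show ?thesis
    proof (cases "d \<in> W")
      case True
      then have "sg (sg d) \<in> W" using W2[OF d] by simp
      then show ?thesis using True Inl d sg4 tauX x sgC[OF sgC[OF d]] by (simp add: tau_Inl)
    next
      case False then show ?thesis using Inl x by (simp add: tau_Inl)
    qed
  qed (use x in simp)
qed

lemma sig'_tau: "x \<in> X \<Longrightarrow> sig' (tau x) = cs x"
proof (cases x)
  case (Inl d)
  assume "x \<in> X"
  then have d: "d \<in> C" using Inl by simp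
  show ?thesis
  proof (cases "d \<in> W")
    case True
    then have "sg (sg d) \<in> W" using W2[OF d] by simp
    then show ?thesis using True Inl d by (simp add: tau_Inl sm_def sinv_sg sgC)
  next
    case False then show ?thesis using Inl by (simp add: tau_Inl sm_def)
  qed
qed simp

lemma mv_tau: "mv tau X = (Inl ` W :: ('d + nat) set)"
proof
  show "mv tau X \<subseteq> (Inl ` W :: ('d + nat) set)"
  proof
    fix x assume "x \<in> mv tau X"
    then have x: "x \<in> X" "tau x \<noteq> x" unfolding mv_def by auto
    then show "x \<in> Inl ` W" by (cases x) (auto simp: tau_Inl split: if_splits)
  qed
  show "(Inl ` W :: ('d + nat) set) \<subseteq> mv tau X"
  proof
    fix x :: "'d + nat" assume "x \<in> Inl ` W"
    then obtain d where d: "x = Inl d" "d \<in> W" by auto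
    then have "d \<in> C" using WC by auto
    then have "sg (sg d) \<noteq> d" using cprops by blast
    then show "x \<in> mv tau X" using d \<open>d \<in> C\<close> unfolding mv_def by (simp add: tau_Inl)
  qed
qed

definition "rho x = al (tau (al x))"

lemma rho_inv: "inv_on rho X"
  unfolding inv_on_def rho_def
proof
  fix x assume x: "x \<in> X"
  have "tau (al x) \<in> X" "tau (tau (al x)) = al x" using tau_inv alX[OF x] unfolding inv_on_def by auto
  then show "al (tau (al x)) \<in> X \<and> al (tau (al (al (tau (al x))))) = x"
    using alX alal x by simp
qed

lemma card_mv_rho: "card (mv rho X) = card W"
proof -
  have "mv rho X = al ` mv tau X"
  proof
    show "mv rho X \<subseteq> al ` mv tau X"
    proof
      fix x assume "x \<in> mv rho X"
      then have x: "x \<in> X" "al (tau (al x)) \<noteq> x" unfolding mv_def rho_def by auto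
      have "tau (al x) \<noteq> al x" using x alal by auto
      then have "al x \<in> mv tau X" using alX x unfolding mv_def by auto
      then show "x \<in> al ` mv tau X" using alal x by force
    qed
    show "al ` mv tau X \<subseteq> mv rho X"
    proof
      fix y assume "y \<in> al ` mv tau X"
      then obtain x where x: "x \<in> X" "tau x \<noteq> x" "y = al x" unfolding mv_def by auto
      have "al (tau (al y)) \<noteq> y"
      proof
        assume "al (tau (al y)) = y"
        then have "al (tau x) = al x" using x alal by simp
        then have "al (al (tau x)) = al (al x)" by simp
        then have "tau x = x" using alal tauX x by simp
        then show False using x by simp
      qed
      then show "y \<in> mv rho X" using x alX unfolding mv_def rho_def by auto
    qed
  qed
  moreover have "inj_on al (mv tau X)"
  proof (rule inj_onI)
    fix x y assume "x \<in> mv tau X" "y \<in> mv tau X" "al x = al y"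
    then have "x \<in> X" "y \<in> X" "al (al x) = al (al y)" unfolding mv_def by auto
    then show "x = y" using alal by simp
  qed
  ultimately show ?thesis using mv_tau by (simp add: card_image)
qed

lemma cardC: "card C = 2 * card W"
proof -
  have "bij_betw sg W (C - W)"
  proof (rule bij_betw_byWitness[where f' = sinv])
    show "\<forall>a\<in>W. sinv (sg a) = a" using WC sinv_sg by auto
    show "\<forall>a\<in>C - W. sg (sinv a) = a" using sg_sinv by auto
    show "sg ` W \<subseteq> C - W" using WC W1 sgC by auto
    show "sinv ` (C - W) \<subseteq> W"
    proof
      fix y assume "y \<in> sinv ` (C - W)"
      then obtain e where e: "e \<in> C" "e \<notin> W" "y = sinv e" by auto
      then show "y \<in> W" using W1[OF sinvC[OF e(1)]] sg_sinv[OF e(1)] by simp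
    qed
  qed
  then have "card W = card (C - W)" by (rule bij_betw_same_card)
  moreover have "card C = card W + card (C - W)"
  proof -
    have fW: "finite W" using finC WC by (rule finite_subset[rotated])
    have "card (C - W) = card C - card W" using card_Diff_subset[OF fW WC] .
    moreover have "card W \<le> card C" using card_mono[OF finC WC] .
    ultimately show ?thesis by linarith
  qed
  ultimately show ?thesis by simp
qed

lemma face_eq: "zc (phi' \<circ> rho) X = zc (cap_rot n sg \<circ> al) X"
proof (rule zc_cong)
  show "(phi' \<circ> rho) ` X \<subseteq> X" using bij_betw_trans[OF inv_bij[OF rho_inv] phi'b]
    by (auto simp: bij_betw_def)
  fix z assume z: "z \<in> X"
  have "(phi' \<circ> rho) z = sig' (tau (al z))" using z alal tauX alX by (simp add: phi'_ap rho_def)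
  also have "\<dots> = cs (al z)" using sig'_tau alX z by blast
  finally show "(phi' \<circ> rho) z = (cap_rot n sg \<circ> al) z" by (simp add: cs_def)
qed

definition "RR = map_rel X al sig' \<union> (map_rel X al sig')\<inverse>"
lemma symRR: "sym RR" unfolding RR_def by (rule sym_Un_converse)
lemma RR_al: "x \<in> X \<Longrightarrow> (x, al x) \<in> RR" unfolding RR_def map_rel_def by auto
lemma RR_sig: "x \<in> X \<Longrightarrow> (x, sig' x) \<in> RR" unfolding RR_def map_rel_def by auto
lemma phi'_RR:
  assumes x: "x \<in> X" shows "(x, phi' x) \<in> RR\<^sup>*"
proof -
  have "(x, al x) \<in> RR\<^sup>*" using RR_al[OF x] by blast
  then have "(x, sig' (al x)) \<in> RR\<^sup>*" using RR_sig[OF alX[OF x]] by (rule rtrancl_into_rtrancl)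
  then show ?thesis by (simp add: phi'_ap)
qed

lemma block_app:
  "2 * zc (cap_rot n sg \<circ> al) X + 4 * ncl RR X \<le> 2 * zc phi' X + card W + 4 * ncl (RR \<union> tg rho X) X"
  using block[OF finX phi'b symRR _ rho_inv] phi'_RR face_eq card_mv_rho by simp

lemma classes_app:
  "ncl (RR \<union> tg rho X) X \<le> card ((\<lambda>h. (map_rel X al (cap_rot n sg))\<^sup>* `` {h}) ` X)"
proof (rule ncl_le[OF finX])
  let ?Q = "RR \<union> tg rho X"
  show "map_rel X al (cap_rot n sg) \<subseteq> ?Q\<^sup>*"
  proof
    fix p assume "p \<in> map_rel X al (cap_rot n sg)"
    then obtain x y where p: "p = (x, y)" "x \<in> X" "y = al x \<or> y = cs x"
      unfolding map_rel_def cs_def by auto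
    have "(x, y) \<in> ?Q\<^sup>*" using p(3)
    proof
      assume "y = al x" then show ?thesis using RR_al p by blast
    next
      assume y: "y = cs x"
      have ax: "al x \<in> X" using alX p by blast
      have r: "rho (al x) \<in> X" using rho_inv ax unfolding inv_on_def by blast
      have 1: "(x, al x) \<in> ?Q\<^sup>*" using RR_al p by blast
      have 2: "(al x, rho (al x)) \<in> ?Q\<^sup>*"
      proof (cases "rho (al x) = al x")
        case True then show ?thesis by simp
      next
        case False then have "(al x, rho (al x)) \<in> tg rho X" using ax unfolding tg_def by auto
        then show ?thesis by blast
      qed
      have 3: "(rho (al x), al (rho (al x))) \<in> ?Q\<^sup>*" using RR_al r by blast
      have "al (rho (al x)) = tau x" unfolding rho_def using alal p tauX by simp
      moreover have "(tau x, sig' (tau x)) \<in> ?Q\<^sup>*" using RR_sig tauX p by blast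
      ultimately have 4: "(al (rho (al x)), cs x) \<in> ?Q\<^sup>*" using sig'_tau p by simp
      show ?thesis using rtrancl_trans[OF rtrancl_trans[OF rtrancl_trans[OF 1 2] 3] 4] y by simp
    qed
    then show "p \<in> ?Q\<^sup>*" using p by simp
  qed
qed

lemma cardX: "card X = card C + 2 * n"
proof -
  have "card X = card (Inl ` C :: ('d + nat) set) + card (Inr ` {1..2*n} :: ('d + nat) set)"
    unfolding tdarts_def by (rule card_Un_disjoint) (auto simp: finC)
  then show ?thesis by (simp add: card_image)
qed

lemma csXb: "bij_betw cs X X" using planar unfolding planar_map_def cs_def by blast

lemma V_bound: "4 * zc cs X \<le> card C + 4"
proof -
  let ?OC = "dorbit cs ` (Inl ` C)" let ?OS = "dorbit cs ` S"
  have XU: "X = Inl ` C \<union> S" unfolding tdarts_def by simp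
  have "dorbit cs ` X = ?OC \<union> ?OS" unfolding XU image_Un ..
  then have c1: "zc cs X \<le> card ?OC + card ?OS" unfolding zc_def by (simp add: card_Un_le)
  have "?OS \<subseteq> {S}" using cs_orbit by auto
  then have c2: "card ?OS \<le> 1" using card_mono[of "{S}" ?OS] by simp
  have OCsub: "Q \<subseteq> Inl ` C" if "Q \<in> ?OC" for Q
  proof -
    from that obtain d where d: "d \<in> C" "Q = dorbit cs (Inl d)" by auto
    show ?thesis unfolding d(2) by (rule dorbit_closed) (auto simp: d(1) sgC)
  qed
  have OC4: "4 \<le> card Q" if "Q \<in> ?OC" for Q
  proof -
    from that obtain d where d: "d \<in> C" "Q = dorbit cs (Inl d)" by auto
    have m1: "Inl (sg d) \<in> Q" using dorbit_step[OF dorbit_self, of cs "Inl d"] d by simp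
    have m2: "Inl (sg (sg d)) \<in> Q" using dorbit_step[OF m1[unfolded d(2)]] d by simp
    have m3: "Inl (sg (sg (sg d))) \<in> Q" using dorbit_step[OF m2[unfolded d(2)]] d by simp
    have m0: "Inl d \<in> Q" using d dorbit_self by simp
    have d1: "sg d \<noteq> d" using sg_ne d by blast
    have d2: "sg (sg d) \<noteq> d" using cprops d by blast
    have d3: "sg (sg (sg d)) \<noteq> d"
    proof
      assume a3: "sg (sg (sg d)) = d"
      have "sg d = sg (sg (sg (sg d)))" using a3 by simp
      also have "\<dots> = d" using sg4[OF d(1)] .
      finally show False using d1 by simp
    qed
    have sgdC: "sg d \<in> C" "sg (sg d) \<in> C" using sgC d(1) by auto
    have d12: "sg (sg d) \<noteq> sg d"
    proof
      assume "sg (sg d) = sg d"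
      then have "sg d = d" using sg_inj[OF sgdC(1) d(1)] by blast
      then show False using d1 by simp
    qed
    have d13: "sg (sg (sg d)) \<noteq> sg d"
    proof
      assume "sg (sg (sg d)) = sg d"
      then have "sg (sg d) = d" using sg_inj[OF sgdC(2) d(1)] by blast
      then show False using d2 by simp
    qed
    have d23: "sg (sg (sg d)) \<noteq> sg (sg d)"
    proof
      assume "sg (sg (sg d)) = sg (sg d)"
      then have "sg (sg d) = sg d" using sg_inj[OF sgdC(2) sgdC(1)] by blast
      then show False using d12 by simp
    qed
    have c4: "card ({Inl d, Inl (sg d), Inl (sg (sg d)), Inl (sg (sg (sg d)))} :: ('d + nat) set) = (4::nat)"
      using d1 d2 d3 d12 d13 d23 by simp
    have fQ: "finite Q" using finite_subset[OF OCsub[OF that] finite_imageI[OF finC]] .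
    have sub4: "{Inl d, Inl (sg d), Inl (sg (sg d)), Inl (sg (sg (sg d)))} \<subseteq> Q"
      using m0 m1 m2 m3 by blast
    show ?thesis using card_mono[OF fQ sub4] c4 by simp
  qed
  have disj: "pairwise disjnt ?OC"
    unfolding pairwise_def disjnt_def
  proof (intro ballI impI)
    fix P Q assume P: "P \<in> ?OC" and Q: "Q \<in> ?OC" and ne: "P \<noteq> Q"
    show "P \<inter> Q = {}"
    proof (rule ccontr)
      assume "P \<inter> Q \<noteq> {}"
      then obtain z where z: "z \<in> P" "z \<in> Q" by auto
      from P obtain d where d: "d \<in> C" "P = dorbit cs (Inl d)" by auto
      from Q obtain e where e: "e \<in> C" "Q = dorbit cs (Inl e)" by auto
      have "dorbit cs z = P" using dorbit_eq[OF finX csXb, of "Inl d" z] d z by simp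
      moreover have "dorbit cs z = Q" using dorbit_eq[OF finX csXb, of "Inl e" z] e z by simp
      ultimately show False using ne by simp
    qed
  qed
  have finOC: "finite ?OC" using finC by simp
  have finQ: "\<forall>Q\<in>?OC. finite Q" using finite_subset[OF OCsub finite_imageI[OF finC]] by blast
  have finQ': "\<And>Q. Q \<in> ?OC \<Longrightarrow> finite Q" using finQ by blast
  have "card (\<Union>?OC) = sum card ?OC" by (rule card_Union_disjoint[OF disj finQ'])
  moreover have "card ?OC * 4 \<le> sum card ?OC" using sum_bounded_below[of ?OC 4 card] OC4 by simp
  moreover have "card (\<Union>?OC) \<le> card (Inl ` C :: ('d + nat) set)"
    using OCsub finC by (intro card_mono) auto
  moreover have "card (Inl ` C :: ('d + nat) set) = card C" by (simp add: card_image)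
  ultimately have "4 * card ?OC \<le> card C" by linarith
  then show ?thesis using c1 c2 by linarith
qed

lemma euler_app: "n + 2 * ncl RR X \<le> zc phi' X + 1"
proof -
  let ?V = "zc cs X" let ?F = "zc (cap_rot n sg \<circ> al) X"
  let ?c = "card ((\<lambda>h. (map_rel X al (cap_rot n sg))\<^sup>* `` {h}) ` X)"
  have E: "int ?V - int (card X div 2) + int ?F = 2 * int ?c"
    using planar unfolding planar_map_def zc_def cs_def by simp
  have cX: "card X div 2 = card W + n" using cardX cardC by simp
  have B: "2 * ?F + 4 * ncl RR X \<le> 2 * zc phi' X + card W + 4 * ncl (RR \<union> tg rho X) X" by (rule block_app)
  have K: "ncl (RR \<union> tg rho X) X \<le> ?c" by (rule classes_app)
  have V: "4 * ?V \<le> card C + 4" by (rule V_bound)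
  show ?thesis using E cX B K V cardC by linarith
qed

end



context tw begin

lemma phi'X: "x \<in> X \<Longrightarrow> phi' x \<in> X" using phi'b by (auto simp: bij_betw_def)
lemma orbX: "x \<in> X \<Longrightarrow> dorbit phi' x \<subseteq> X" using dorbit_subset[of phi' X x] phi'X by blast
lemma phi_eq: "x \<in> X \<Longrightarrow> y \<in> dorbit phi' x \<Longrightarrow> dorbit phi' y = dorbit phi' x"
  using dorbit_eq[OF finX phi'b] by blast
lemma phi_sym: "x \<in> X \<Longrightarrow> y \<in> dorbit phi' x \<Longrightarrow> x \<in> dorbit phi' y"
  using dorbit_sym[OF finX phi'b] by blast

lemma noncap_class:
  assumes y: "y \<in> X" and yS: "dorbit phi' y \<inter> S = {}"
  shows "RR\<^sup>* `` {y} \<subseteq> dorbit phi' y \<union> dorbit phi' (al y)"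
    "(dorbit phi' y \<union> dorbit phi' (al y)) \<inter> S = {}"
proof -
  let ?O1 = "dorbit phi' y" let ?O2 = "dorbit phi' (al y)"
  have O1X: "?O1 \<subseteq> X" using orbX y .
  have ay: "al y \<in> X" using alX y .
  have O2X: "?O2 \<subseteq> X" using orbX ay .
  have a: "al z \<notin> S" if z: "z \<in> ?O1" for z
  proof
    assume "al z \<in> S"
    then have "sig' (al z) \<in> S" by (rule sig'S)
    moreover have "phi' z \<in> ?O1" using dorbit_step[OF z] .
    ultimately have "sig' (al z) \<in> ?O1 \<inter> S" by (simp add: phi'_ap)
    then show False using yS by blast
  qed
  have bk: "al (phi' w) \<in> dorbit phi' (al w)" if w: "w \<in> X" "al w \<in> X - S" for w
  proof -
    let ?v = "al (phi' w)"
    have vX: "?v \<in> X" using alX phi'X w by blast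
    have "phi' ?v = sig' (phi' w)" using alal phi'X w by (simp add: phi'_ap)
    also have "\<dots> = al w" using sig'N[OF w(2)] by (simp add: phi'_ap)
    finally have "al w \<in> dorbit phi' ?v" using dorbit_step[OF dorbit_self, of phi' ?v] by simp
    then show ?thesis using phi_sym vX by blast
  qed
  have b: "w \<notin> S \<and> al w \<in> ?O1" if "w \<in> ?O2" for w
    using that
  proof (induction rule: dorbit_induct)
    case base
    show ?case using a[OF dorbit_self] alal y dorbit_self by simp
  next
    case (step w)
    have wX: "w \<in> X" using O2X step(1) by blast
    have awX: "al w \<in> X" using alX wX .
    have awN: "al w \<in> X - S" using step(2) yS awX by blast
    have "phi' w \<notin> S" using sig'N[OF awN] by (simp add: phi'_ap)
    moreover have "al (phi' w) \<in> ?O1"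
    proof -
      have "dorbit phi' (al w) = ?O1" using phi_eq[OF y, of "al w"] step(2) by simp
      then show ?thesis using bk[OF wX awN] by simp
    qed
    ultimately show ?case by simp
  qed
  have c: "al z \<in> ?O2" if "z \<in> ?O1" for z
    using that
  proof (induction rule: dorbit_induct)
    case base show ?case by (rule dorbit_self)
  next
    case (step z)
    have zX: "z \<in> X" using O1X step(1) by blast
    have azN: "al z \<in> X - S" using a[OF step(1)] alX[OF zX] by blast
    have "dorbit phi' (al z) = ?O2" using phi_eq[OF ay, of "al z"] step(2) by simp
    then show ?case using bk[OF zX azN] by simp
  qed
  let ?U = "?O1 \<union> ?O2"
  show US: "?U \<inter> S = {}" using yS b by blast
  have alU: "al u \<in> ?U" if "u \<in> ?U" for u using that b c by blast
  have sigU: "sig' u \<in> ?U" if u: "u \<in> ?U" for u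
  proof -
    have uX: "u \<in> X" using u O1X O2X by blast
    have "sig' u = phi' (al u)" using alal uX by (simp add: phi'_ap)
    moreover have "al u \<in> ?U" using alU u .
    ultimately show ?thesis using dorbit_step[of "al u" phi' y] dorbit_step[of "al u" phi' "al y"] by auto
  qed
  have closed: "v \<in> ?U" if "u \<in> ?U" "(u, v) \<in> RR" for u v
  proof -
    have uX: "u \<in> X" using that O1X O2X by blast
    from that(2) consider "(u, v) \<in> map_rel X al sig'" | "(v, u) \<in> map_rel X al sig'"
      unfolding RR_def by auto
    then show ?thesis
    proof cases
      case 1 then show ?thesis unfolding map_rel_def using alU sigU that(1) by auto
    next
      case 2
      then have vX: "v \<in> X" and vu: "u = al v \<or> u = sig' v" unfolding map_rel_def by auto
      from vu show ?thesis
      proof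
        assume "u = al v" then have "v = al u" using alal vX by simp
        then show ?thesis using alU that(1) by simp
      next
        assume uv: "u = sig' v"
        have "v \<notin> S"
        proof
          assume "v \<in> S" then have "u \<in> S" using uv sig'S by simp
          then show False using US that(1) by blast
        qed
        then have "v = sig' u" using sig'N vX uv by simp
        then show ?thesis using sigU that(1) by simp
      qed
    qed
  qed
  show "RR\<^sup>* `` {y} \<subseteq> ?U"
  proof
    fix z assume "z \<in> RR\<^sup>* `` {y}"
    then have "(y, z) \<in> RR\<^sup>*" by simp
    then show "z \<in> ?U"
    proof (induction rule: rtrancl_induct)
      case base then show ?case by (rule UnI1, rule dorbit_self)
    next
      case (step u v) then show ?case using closed by blast
    qed
  qed
qed

lemma orbit_in_class:
  assumes x: "x \<in> X" shows "dorbit phi' x \<subseteq> RR\<^sup>* `` {x}"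
proof
  fix z assume "z \<in> dorbit phi' x"
  then show "z \<in> RR\<^sup>* `` {x}"
  proof (induction rule: dorbit_induct)
    case base then show ?case by simp
  next
    case (step z)
    have "z \<in> X" using orbX[OF x] step(1) by blast
    then have "(z, phi' z) \<in> RR\<^sup>*" by (rule phi'_RR)
    then show ?case using step(2) by (auto intro: rtrancl_trans)
  qed
qed

lemma noncap_count:
  "card {Q \<in> dorbit phi' ` X. Q \<inter> S = {}} \<le> 2 * card {K \<in> (\<lambda>x. RR\<^sup>* `` {x}) ` X. K \<inter> S = {}}"
proof -
  let ?NO = "{Q \<in> dorbit phi' ` X. Q \<inter> S = {}}"
  let ?NK = "{K \<in> (\<lambda>x. RR\<^sup>* `` {x}) ` X. K \<inter> S = {}}"
  define F where "F K = {dorbit phi' x | x. x \<in> X \<and> RR\<^sup>* `` {x} = K}" for K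
  have sub: "?NO \<subseteq> (\<Union>K\<in>?NK. F K)"
  proof
    fix Q assume "Q \<in> ?NO"
    then obtain y where y: "y \<in> X" "Q = dorbit phi' y" "dorbit phi' y \<inter> S = {}" by auto
    have "RR\<^sup>* `` {y} \<inter> S = {}" using noncap_class[OF y(1,3)] by blast
    then have "RR\<^sup>* `` {y} \<in> ?NK" using y by auto
    moreover have "Q \<in> F (RR\<^sup>* `` {y})" unfolding F_def using y by auto
    ultimately show "Q \<in> (\<Union>K\<in>?NK. F K)" by blast
  qed
  have F2: "card (F K) \<le> 2" if K: "K \<in> ?NK" for K
  proof -
    from K obtain x0 where x0: "x0 \<in> X" "K = RR\<^sup>* `` {x0}" "K \<inter> S = {}" by auto
    have o0: "dorbit phi' x0 \<inter> S = {}" using orbit_in_class[OF x0(1)] x0 by blast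
    note NC = noncap_class[OF x0(1) o0]
    have "F K \<subseteq> {dorbit phi' x0, dorbit phi' (al x0)}"
    proof
      fix Q assume "Q \<in> F K"
      then obtain x where x: "x \<in> X" "RR\<^sup>* `` {x} = K" "Q = dorbit phi' x" unfolding F_def by auto
      have "x \<in> K" using x(2) by auto
      then have "x \<in> dorbit phi' x0 \<or> x \<in> dorbit phi' (al x0)" using NC(1) x0(2) by blast
      then have "dorbit phi' x = dorbit phi' x0 \<or> dorbit phi' x = dorbit phi' (al x0)"
        using phi_eq[OF x0(1), of x] phi_eq[OF alX[OF x0(1)], of x] by blast
      then show "Q \<in> {dorbit phi' x0, dorbit phi' (al x0)}" using x(3) by simp
    qed
    then have "card (F K) \<le> card {dorbit phi' x0, dorbit phi' (al x0)}" by (rule card_mono[rotated]) simp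
    also have "\<dots> \<le> 2" by (simp add: card_insert_le_m1)
    finally show ?thesis .
  qed
  have finNK: "finite ?NK" using finX by simp
  have "card ?NO \<le> card (\<Union>K\<in>?NK. F K)"
  proof (rule card_mono[OF _ sub])
    show "finite (\<Union>K\<in>?NK. F K)"
    proof (rule finite_subset)
      show "(\<Union>K\<in>?NK. F K) \<subseteq> dorbit phi' ` X" unfolding F_def by auto
    qed (simp add: finX)
  qed
  also have "\<dots> \<le> (\<Sum>K\<in>?NK. card (F K))" by (rule card_UN_le[OF finNK])
  also have "\<dots> \<le> card ?NK * 2" using sum_bounded_above[of ?NK "\<lambda>K. card (F K)" 2] F2 by simp
  finally show ?thesis by simp
qed

lemma cap_count: "n + 1 \<le> zc (fr phi' S) S"
proof -
  let ?A = "dorbit phi' ` X"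
  let ?CO = "{Q \<in> ?A. Q \<inter> S \<noteq> {}}" let ?NO = "{Q \<in> ?A. Q \<inter> S = {}}"
  let ?B = "(\<lambda>x. RR\<^sup>* `` {x}) ` X"
  let ?CK = "{K \<in> ?B. K \<inter> S \<noteq> {}}" let ?NK = "{K \<in> ?B. K \<inter> S = {}}"
  have z: "zc phi' X = card ?CO + card ?NO"
  proof -
    have "?A = ?CO \<union> ?NO" by auto
    moreover have "card (?CO \<union> ?NO) = card ?CO + card ?NO"
      by (rule card_Un_disjoint) (auto simp: finX)
    ultimately show ?thesis unfolding zc_def by simp
  qed
  have k: "ncl RR X = card ?CK + card ?NK"
  proof -
    have "?B = ?CK \<union> ?NK" by auto
    moreover have "card (?CK \<union> ?NK) = card ?CK + card ?NK"
      by (rule card_Un_disjoint) (auto simp: finX)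
    ultimately show ?thesis unfolding ncl_def by simp
  qed
  have "Inr 1 \<in> X" using npos by simp
  then have "RR\<^sup>* `` {Inr 1} \<in> ?CK" using npos by auto
  moreover have "finite ?CK" using finX by simp
  ultimately have "card ?CK \<ge> 1" by (simp add: Suc_le_eq card_gt_0_iff) blast
  moreover have "n + 2 * ncl RR X \<le> zc phi' X + 1" by (rule euler_app)
  moreover have "card ?NO \<le> 2 * card ?NK" by (rule noncap_count)
  moreover have "zc (fr phi' S) S = card ?CO" by (rule fr_count[OF finX phi'b SX])
  ultimately show ?thesis using z k by linarith
qed

end



context tw begin

definition "mm x = cinv (fr phi' S x)"

lemma finS: "finite S" by simp
lemma cardS: "card S = 2 * n" by (simp add: card_image)

lemma frS: "x \<in> S \<Longrightarrow> fr phi' S x \<in> S" using fr_props(2)[OF finX phi'b SX] by blast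
lemma mmS: "x \<in> S \<Longrightarrow> mm x \<in> S" unfolding mm_def using frS cinvS by blast
lemma cs_mm: "x \<in> S \<Longrightarrow> cs (mm x) = fr phi' S x" unfolding mm_def using frS cs_cinv by blast

lemma mm_mm: assumes x: "x \<in> S" shows "mm (mm x) = x"
proof -
  have alc: "\<forall>x\<in>X. al x \<in> X \<and> al (al x) = x" using alX alal by blast
  have sS: "\<forall>x\<in>S. sig' x \<in> S" using sig'S by blast
  have sN: "\<forall>x\<in>X - S. sig' x \<in> X - S \<and> sig' (sig' x) = x" using sig'N by blast
  have e: "mm x \<in> S" using mmS x .
  have "sig' (mm x) = cs (mm x)" using e by auto
  also have "\<dots> = fr (sig' \<circ> al) S x" using cs_mm[OF x] unfolding phi'_def .
  finally have "fr (sig' \<circ> al) S (mm x) = sig' x"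
    by (rule reversal[OF finX alc sig'b SX sS sN x e])
  then have "fr phi' S (mm x) = cs x" using x unfolding phi'_def by auto
  then show ?thesis unfolding mm_def[of "mm x"] using cinv_cs x by simp
qed

lemma mm_inv: "inv_on mm S" unfolding inv_on_def using mmS mm_mm by blast

lemma fr_eq: "x \<in> S \<Longrightarrow> (cs \<circ> mm) x = fr phi' S x" using cs_mm by simp

lemma zc_csmm: "n + 1 \<le> zc (cs \<circ> mm) S"
proof -
  have img: "(cs \<circ> mm) ` S \<subseteq> S"
  proof
    fix y assume "y \<in> (cs \<circ> mm) ` S"
    then obtain x where x: "x \<in> S" "y = cs (mm x)" by auto
    then show "y \<in> S" using csS[OF mmS[OF x(1)]] by simp
  qed
  have "zc (cs \<circ> mm) S = zc (fr phi' S) S" by (rule zc_cong[OF img fr_eq])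
  then show ?thesis using cap_count by simp
qed

lemma mm_ne: assumes x: "x \<in> S" shows "mm x \<noteq> x"
proof -
  have "2 * zc (cs \<circ> mm) S \<le> 2 * zc cs S + card (mv mm S)"
    using chain[OF finS csb mm_inv] by blast
  then have "2 * n \<le> card (mv mm S)" using zc_csmm zc_cs by linarith
  moreover have "mv mm S \<subseteq> S" unfolding mv_def by auto
  ultimately have "mv mm S = S" using cardS by (metis card_seteq finS)
  then show ?thesis using x unfolding mv_def by auto
qed

lemma parity_lt:
  assumes jk: "j < k" "1 \<le> j" "k \<le> 2*n" and m: "mm (Inr j) = Inr k"
  shows "odd j \<longleftrightarrow> even k"
proof -
  define a where "a = (Inr j :: 'd + nat)"
  define b where "b = (Inr k :: 'd + nat)"
  have aS: "a \<in> S" and bS: "b \<in> S" and ab: "a \<noteq> b" using jk unfolding a_def b_def by auto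
  have mab: "mm a = b" using m unfolding a_def b_def .
  have mba: "mm b = a" using mm_mm[OF aS] mab by simp
  define t where "t x = (if x = a \<or> x = b then x else mm x)" for x
  have mmnab: "mm x \<noteq> a \<and> mm x \<noteq> b" if "x \<in> S" "x \<noteq> a" "x \<noteq> b" for x
  proof -
    have "x = b" if "mm x = a"
    proof -
      have "x = mm (mm x)" using mm_mm[OF \<open>x \<in> S\<close>] by simp
      then show ?thesis using that mab by simp
    qed
    moreover have "x = a" if "mm x = b"
    proof -
      have "x = mm (mm x)" using mm_mm[OF \<open>x \<in> S\<close>] by simp
      then show ?thesis using that mba by simp
    qed
    ultimately show ?thesis using that by blast
  qed
  have tinv: "inv_on t S" unfolding inv_on_def t_def using mmS mm_mm mmnab by auto
  have mvt: "mv t S = S - {a, b}" unfolding mv_def t_def using mm_ne by auto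
  have cmv: "card (mv t S) = 2 * n - 2" unfolding mvt using aS bS ab cardS by (simp add: card_Diff_subset)
  define g where "g = cs \<circ> sw a b"
  have gb: "bij_betw g S S" unfolding g_def by (rule bij_comp_sw[OF csb aS bS])
  have pw: "(g \<circ> t) x = (cs \<circ> mm) x" if "x \<in> S" for x
  proof (cases "x = a \<or> x = b")
    case True then show ?thesis using mab mba ab unfolding g_def t_def sw_def by auto
  next
    case False then show ?thesis using mmnab[OF that] unfolding g_def t_def sw_def by auto
  qed
  have img: "(g \<circ> t) ` S \<subseteq> S"
  proof
    fix y assume "y \<in> (g \<circ> t) ` S"
    then obtain x where x: "x \<in> S" "y = (g \<circ> t) x" by blast
    have "t x \<in> S" using tinv x(1) unfolding inv_on_def by blast
    then have "g (t x) \<in> S" using gb unfolding bij_betw_def by blast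
    then show "y \<in> S" using x(2) by simp
  qed
  have "zc (g \<circ> t) S = zc (cs \<circ> mm) S" by (rule zc_cong[OF img pw])
  then have z1: "n + 1 \<le> zc (g \<circ> t) S" using zc_csmm by simp
  have z2: "zc g S \<le> 2" using transp_U[OF finS csb aS bS] zc_cs unfolding g_def by simp
  note CH = chain[OF finS gb tinv]
  have "2 * zc (g \<circ> t) S = 2 * zc g S + card (mv t S)" using CH z1 z2 cmv npos by linarith
  then have tg: "\<forall>x\<in>S. t x \<in> dorbit g x" using CH by blast
  let ?I = "(Inr ` {j+1..k} :: ('d + nat) set)"
  let ?J = "(Inr ` {j+1..k-1} :: ('d + nat) set)"
  have gI: "g x \<in> ?I" if "x \<in> ?I" for x
  proof -
    from that obtain i where i: "x = Inr i" "j + 1 \<le> i" "i \<le> k" by auto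
    show ?thesis
    proof (cases "i = k")
      case True then show ?thesis using i jk unfolding g_def sw_def a_def b_def by auto
    next
      case False then show ?thesis using i jk unfolding g_def sw_def a_def b_def by auto
    qed
  qed
  have J: "\<forall>x\<in>?J. t x \<in> ?J \<and> t (t x) = x \<and> t x \<noteq> x"
  proof
    fix x assume xJ: "x \<in> ?J"
    then have xS: "x \<in> S" and xa: "x \<noteq> a" and xb: "x \<noteq> b" using jk unfolding a_def b_def by auto
    have xI: "x \<in> ?I" using xJ by auto
    have "t x \<in> dorbit g x" using tg xS by blast
    moreover have "dorbit g x \<subseteq> ?I" using dorbit_closed[of ?I g x] gI xI by blast
    ultimately have tI: "t x \<in> ?I" by blast
    have tx: "t x = mm x" using xa xb unfolding t_def by simp
    have "t x \<noteq> b" using tx mmnab[OF xS xa xb] by simp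
    then have "t x \<in> ?J" using tI unfolding b_def by auto
    moreover have "t (t x) = x" using tinv xS unfolding inv_on_def by blast
    moreover have "t x \<noteq> x" using tx mm_ne[OF xS] by simp
    ultimately show "t x \<in> ?J \<and> t (t x) = x \<and> t x \<noteq> x" by blast
  qed
  have "even (card ?J)" by (rule even_inv[OF _ J]) simp
  moreover have "card ?J = k - 1 - j" by (simp add: card_image)
  ultimately have "even (k - 1 - j)" by simp
  then show ?thesis using jk by presburger
qed

definition "RW = {(x, y). x \<in> X \<and> (y = al x \<or> (\<exists>d. x = Inl d \<and> y = Inl (sm d)))}"

lemma RW_path: assumes x: "x \<in> S" shows "(x, mm x) \<in> RW\<^sup>*"
proof -
  note P = fr_props[OF finX phi'b SX x]
  define T where "T = retT phi' S x"
  have xsX: "\<And>i. (phi' ^^ i) x \<in> X" using bij_funpow_inj[OF phi'b] x SX by blast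
  have walk: "(x, (phi' ^^ i) x) \<in> RW\<^sup>*" if "i < T" for i
    using that
  proof (induction i)
    case 0 then show ?case by simp
  next
    case (Suc i)
    let ?y = "(phi' ^^ i) x"
    have ns: "(phi' ^^ Suc i) x \<notin> S" using P(3)[of "Suc i"] Suc.prems T_def by simp
    have ayX: "al ?y \<in> X" using alX xsX by blast
    have "al ?y \<notin> S"
    proof
      assume "al ?y \<in> S" then have "sig' (al ?y) \<in> S" by (rule sig'S)
      then show False using ns by (simp add: phi'_ap)
    qed
    then have "al ?y \<in> Inl ` C" using ayX XS by blast
    then obtain d where d: "al ?y = Inl d" "d \<in> C" by blast
    have s1: "(?y, al ?y) \<in> RW" unfolding RW_def using xsX by simp
    have s2: "(al ?y, Inl (sm d)) \<in> RW" unfolding RW_def using d ayX by simp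
    have "(phi' ^^ Suc i) x = Inl (sm d)" using d by (simp add: phi'_ap)
    then show ?case using Suc.IH Suc.prems s1 s2
      by (metis Suc_lessD rtrancl.rtrancl_into_rtrancl)
  qed
  have "T > 0" using P(1) T_def by simp
  then obtain T' where T': "T = Suc T'" using gr0_implies_Suc by blast
  let ?y = "(phi' ^^ T') x"
  have fx: "fr phi' S x = sig' (al ?y)" unfolding fr_def using T' T_def by (simp add: phi'_ap)
  have ayX: "al ?y \<in> X" using alX xsX by blast
  have ayS: "al ?y \<in> S"
  proof (rule ccontr)
    assume "al ?y \<notin> S"
    then have "sig' (al ?y) \<in> X - S" using sig'N ayX by blast
    then show False using fx frS[OF x] by simp
  qed
  have "fr phi' S x = cs (al ?y)" using fx ayS by auto
  then have "mm x = al ?y" unfolding mm_def using cinv_cs[OF ayS] by simp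
  moreover have "(x, ?y) \<in> RW\<^sup>*" using walk T' by simp
  moreover have "(?y, al ?y) \<in> RW" unfolding RW_def using xsX by simp
  ultimately show ?thesis by (simp add: rtrancl.rtrancl_into_rtrancl)
qed

lemma arcs:
  assumes j: "j \<in> {1..2*n}"
  shows "\<exists>k\<in>{1..2*n}. (Inr j, Inr k) \<in> RW\<^sup>* \<and> (odd j \<longleftrightarrow> even k)"
proof -
  have jS: "Inr j \<in> S" using j by simp
  obtain k where k: "mm (Inr j) = Inr k" "k \<in> {1..2*n}" using mmS[OF jS] by auto
  have "k \<noteq> j" using mm_ne[OF jS] k by auto
  have par: "odd j \<longleftrightarrow> even k"
  proof (cases "j < k")
    case True then show ?thesis using parity_lt[of j k] k j by auto
  next
    case False
    then have "k < j" using \<open>k \<noteq> j\<close> by simp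
    moreover have "mm (Inr k) = Inr j" using mm_mm[OF jS] k by simp
    ultimately have "odd k \<longleftrightarrow> even j" using parity_lt[of k j] k j by auto
    then show ?thesis by auto
  qed
  show ?thesis using RW_path[OF jS] k par by auto
qed

end



section \<open>Noncrossing matchings\<close>

definition mc1 :: "nat \<Rightarrow> nat \<Rightarrow> nat \<Rightarrow> nat" where
  "mc1 p q j = (if j = p then q else if j = q then p else if p < j \<and> j < q then (if even j then j + 1 else j - 1)
      else (if odd j then j + 1 else j - 1))"

lemma mc1_props:
  assumes "odd p" "even q" "p < q" "1 \<le> p" "q \<le> 2*n" "j \<in> {1..2*n}"
  shows "mc1 p q j \<in> {1..2*n} \<and> mc1 p q j \<noteq> j \<and> mc1 p q (mc1 p q j) = j"
  using assms unfolding mc1_def by (auto; presburger)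

lemma mc1_nc:
  assumes "odd p" "even q" "p < q" "1 \<le> p" "q \<le> 2*n"
  shows "\<not> (\<exists>i j k l. 1 \<le> i \<and> i < j \<and> j < k \<and> k < l \<and> l \<le> 2*n \<and> mc1 p q i = k \<and> mc1 p q j = l)"
  using assms unfolding mc1_def by (auto; presburger)

lemma nc1:
  assumes "odd p" "even q" "p < q" "1 \<le> p" "q \<le> 2*n"
  shows "noncrossing_matching n (mc1 p q)"
  unfolding noncrossing_matching_def using mc1_props[OF assms] mc1_nc[OF assms] by blast
definition rotp :: "nat \<Rightarrow> nat \<Rightarrow> nat" where "rotp n j = (if j = 2*n then 1 else j + 1)"
definition rotm :: "nat \<Rightarrow> nat \<Rightarrow> nat" where "rotm n j = (if j = 1 then 2*n else j - 1)"

lemma nc_rot: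
  assumes nc: "noncrossing_matching n m" and n: "1 \<le> n"
  shows "noncrossing_matching n (\<lambda>j. rotm n (m (rotp n j)))"
proof -
  let ?p = "rotp n" let ?q = "rotm n"
  have P: "\<forall>j\<in>{1..2*n}. m j \<in> {1..2*n} \<and> m j \<noteq> j \<and> m (m j) = j"
    and N: "\<not> (\<exists>i j k l. 1 \<le> i \<and> i < j \<and> j < k \<and> k < l \<and> l \<le> 2*n \<and> m i = k \<and> m j = l)"
    using nc unfolding noncrossing_matching_def by blast+
  have pr: "?p j \<in> {1..2*n}" if "j \<in> {1..2*n}" for j using that n unfolding rotp_def by auto
  have qr: "?q j \<in> {1..2*n}" if "j \<in> {1..2*n}" for j using that n unfolding rotm_def by auto
  have qp: "?q (?p j) = j" if "j \<in> {1..2*n}" for j using that n unfolding rotp_def rotm_def by auto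
  have pq: "?p (?q j) = j" if "j \<in> {1..2*n}" for j using that n unfolding rotp_def rotm_def by auto
  have P2: "?q (m (?p j)) \<in> {1..2*n} \<and> ?q (m (?p j)) \<noteq> j \<and> ?q (m (?p (?q (m (?p j))))) = j"
    if j: "j \<in> {1..2*n}" for j
  proof -
    have a: "m (?p j) \<in> {1..2*n}" "m (?p j) \<noteq> ?p j" "m (m (?p j)) = ?p j" using P pr[OF j] by auto
    have "?q (m (?p j)) \<noteq> j"
    proof
      assume "?q (m (?p j)) = j"
      then have "?p (?q (m (?p j))) = ?p j" by simp
      then show False using pq[OF a(1)] a(2) by simp
    qed
    moreover have "?q (m (?p (?q (m (?p j))))) = j" using pq[OF a(1)] a(3) qp[OF j] by simp
    ultimately show ?thesis using qr[OF a(1)] by simp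
  qed
  have N2: "\<not> (\<exists>i j k l. 1 \<le> i \<and> i < j \<and> j < k \<and> k < l \<and> l \<le> 2*n \<and> ?q (m (?p i)) = k \<and> ?q (m (?p j)) = l)"
  proof
    assume "\<exists>i j k l. 1 \<le> i \<and> i < j \<and> j < k \<and> k < l \<and> l \<le> 2*n \<and> ?q (m (?p i)) = k \<and> ?q (m (?p j)) = l"
    then obtain i j k l where h: "1 \<le> i" "i < j" "j < k" "k < l" "l \<le> 2*n" "?q (m (?p i)) = k" "?q (m (?p j)) = l"
      by blast
    have ir: "i \<in> {1..2*n}" "j \<in> {1..2*n}" "k \<in> {1..2*n}" "l \<in> {1..2*n}" using h(1-5) by auto
    have mi: "m (?p i) = ?p k"
    proof -
      have "m (?p i) \<in> {1..2*n}" using P pr[OF ir(1)] by blast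
      then show ?thesis using h(6) pq by metis
    qed
    have mj: "m (?p j) = ?p l"
    proof -
      have "m (?p j) \<in> {1..2*n}" using P pr[OF ir(2)] by blast
      then show ?thesis using h(7) pq by metis
    qed
    have mk: "m (?p k) = ?p i" using P pr[OF ir(1)] mi by metis
    have ml: "m (?p l) = ?p j" using P pr[OF ir(2)] mj by metis
    show False
    proof (cases "l = 2*n")
      case False
      then have "1 \<le> ?p i \<and> ?p i < ?p j \<and> ?p j < ?p k \<and> ?p k < ?p l \<and> ?p l \<le> 2*n"
        using h(1-5) unfolding rotp_def by auto
      then show False using N mi mj by blast
    next
      case True
      then have "1 \<le> ?p l \<and> ?p l < ?p i \<and> ?p i < ?p j \<and> ?p j < ?p k \<and> ?p k \<le> 2*n"
        using h(1-5) unfolding rotp_def by auto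
      then show False using N ml mi by blast
    qed
  qed
  show ?thesis unfolding noncrossing_matching_def using P2 N2 by blast
qed

lemma exists_nc:
  assumes "odd p" "even q" "p \<in> {1..2*n}" "q \<in> {1..2*n}"
  shows "\<exists>m. noncrossing_matching n m \<and> m p = q"
proof (cases "p < q")
  case True
  have "noncrossing_matching n (mc1 p q)" using nc1[of p q n] assms True by auto
  moreover have "mc1 p q p = q" unfolding mc1_def by simp
  ultimately show ?thesis by blast
next
  case False
  have pq: "p \<noteq> q" using assms by auto
  then have qp: "q < p" using False by simp
  have n: "1 \<le> n" using assms by auto
  have p2: "p < 2*n" using assms by (metis atLeastAtMost_iff dvd_triv_left le_neq_implies_less)
  have o: "odd (q + 1)" "even (p + 1)" using assms by auto
  have "q + 1 < p + 1" "1 \<le> q + 1" "p + 1 \<le> 2*n" using assms qp p2 by auto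
  then have "noncrossing_matching n (mc1 (q + 1) (p + 1))" using nc1 o by blast
  then have "noncrossing_matching n (\<lambda>j. rotm n (mc1 (q + 1) (p + 1) (rotp n j)))" using nc_rot n by blast
  moreover have "rotm n (mc1 (q + 1) (p + 1) (rotp n p)) = q"
    using assms qp p2 unfolding mc1_def rotp_def rotm_def by auto
  ultimately show ?thesis by blast
qed



definition smA :: "'d set \<Rightarrow> ('d \<Rightarrow> 'd) \<Rightarrow> 'd set \<Rightarrow> 'd \<Rightarrow> 'd" where
  "smA C sg Ov d = (if d \<in> Ov then inv_into C sg d else sg d)"
definition smI :: "'d set \<Rightarrow> ('d \<Rightarrow> 'd) \<Rightarrow> 'd set \<Rightarrow> 'd \<Rightarrow> 'd" where
  "smI C sg Ov d = (if d \<in> Ov then sg d else inv_into C sg d)"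
definition RWg :: "nat \<Rightarrow> 'd set \<Rightarrow> ('d + nat \<Rightarrow> 'd + nat) \<Rightarrow> ('d \<Rightarrow> 'd) \<Rightarrow> (('d + nat) \<times> ('d + nat)) set" where
  "RWg n C al smf = {(x, y). x \<in> tdarts n C \<and> (y = al x \<or> (\<exists>d. x = Inl d \<and> y = Inl (smf d)))}"

locale tdn =
  fixes n :: nat and C :: "'d set" and sg :: "'d \<Rightarrow> 'd" and Ov :: "'d set"
    and al :: "'d + nat \<Rightarrow> 'd + nat"
  assumes td: "tangle_diagram n C sg Ov al" and npos: "1 \<le> n"

sublocale tdn \<subseteq> A: tw n C sg Ov al Ov
proof unfold_locales
  have c: "\<forall>d\<in>C. (sg ^^ 4) d = d \<and> sg (sg d) \<noteq> d \<and> (d \<in> Ov \<longleftrightarrow> sg (sg d) \<in> Ov) \<and> (d \<in> Ov \<longleftrightarrow> sg d \<notin> Ov)"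
    using td unfolding tangle_diagram_def by blast
  show "tangle_diagram n C sg Ov al" by (rule td)
  show "Ov \<subseteq> C" using td unfolding tangle_diagram_def by blast
  show "\<And>d. d \<in> C \<Longrightarrow> (d \<in> Ov) = (sg (sg d) \<in> Ov)" using c by blast
  show "\<And>d. d \<in> C \<Longrightarrow> (d \<in> Ov) = (sg d \<notin> Ov)" using c by blast
  show "1 \<le> n" by (rule npos)
qed

sublocale tdn \<subseteq> I: tw n C sg Ov al "C - Ov"
proof unfold_locales
  have c: "\<forall>d\<in>C. (sg ^^ 4) d = d \<and> sg (sg d) \<noteq> d \<and> (d \<in> Ov \<longleftrightarrow> sg (sg d) \<in> Ov) \<and> (d \<in> Ov \<longleftrightarrow> sg d \<notin> Ov)"
    using td unfolding tangle_diagram_def by blast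
  have sgC: "\<And>d. d \<in> C \<Longrightarrow> sg d \<in> C" using td unfolding tangle_diagram_def bij_betw_def by blast
  show "tangle_diagram n C sg Ov al" by (rule td)
  show "C - Ov \<subseteq> C" by blast
  show "\<And>d. d \<in> C \<Longrightarrow> (d \<in> C - Ov) = (sg (sg d) \<in> C - Ov)" using c sgC by blast
  show "\<And>d. d \<in> C \<Longrightarrow> (d \<in> C - Ov) = (sg d \<notin> C - Ov)" using c sgC by blast
  show "1 \<le> n" by (rule npos)
qed

context tdn begin

abbreviation "sA \<equiv> smA C sg Ov"
abbreviation "sI \<equiv> smI C sg Ov"

lemma A_sm: "A.sm d = sA d" unfolding A.sm_def A.sinv_def smA_def by simp
lemma I_sm: "d \<in> C \<Longrightarrow> I.sm d = sI d" unfolding I.sm_def I.sinv_def smI_def by auto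

lemma A_RW: "A.RW = RWg n C al sA" unfolding A.RW_def RWg_def A_sm by simp
lemma I_RW: "I.RW = RWg n C al sI"
  unfolding I.RW_def RWg_def using I_sm by fastforce

lemma sA_C: "d \<in> C \<Longrightarrow> sA d \<in> C" using A.smC A_sm by metis
lemma sA_inv: "d \<in> C \<Longrightarrow> sA (sA d) = d" using A.smsm A_sm by metis
lemma sI_C: "d \<in> C \<Longrightarrow> sI d \<in> C" using I.smC I_sm by metis
lemma sI_inv: "d \<in> C \<Longrightarrow> sI (sI d) = d" using I.smsm I_sm I.smC by metis

lemma arcsA: "j \<in> {1..2*n} \<Longrightarrow> \<exists>k\<in>{1..2*n}. (Inr j, Inr k) \<in> (RWg n C al sA)\<^sup>* \<and> (odd j \<longleftrightarrow> even k)"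
  using A.arcs A_RW by simp
lemma arcsI: "j \<in> {1..2*n} \<Longrightarrow> \<exists>k\<in>{1..2*n}. (Inr j, Inr k) \<in> (RWg n C al sI)\<^sup>* \<and> (odd j \<longleftrightarrow> even k)"
  using I.arcs I_RW by simp

lemma RW_sym:
  assumes smC: "\<And>d. d \<in> C \<Longrightarrow> smf d \<in> C" and sminv: "\<And>d. d \<in> C \<Longrightarrow> smf (smf d) = d"
    and uv: "(u, v) \<in> RWg n C al smf"
  shows "(v, u) \<in> RWg n C al smf"
proof -
  from uv have u: "u \<in> tdarts n C" and c: "v = al u \<or> (\<exists>d. u = Inl d \<and> v = Inl (smf d))"
    unfolding RWg_def by auto
  from c show ?thesis
  proof
    assume "v = al u" then show ?thesis using A.alX A.alal u unfolding RWg_def by auto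
  next
    assume "\<exists>d. u = Inl d \<and> v = Inl (smf d)"
    then obtain d where d: "u = Inl d" "v = Inl (smf d)" by blast
    then have dC: "d \<in> C" using u by simp
    then show ?thesis using d smC sminv unfolding RWg_def by auto
  qed
qed

lemma RW_sym_rt:
  assumes smC: "\<And>d. d \<in> C \<Longrightarrow> smf d \<in> C" and sminv: "\<And>d. d \<in> C \<Longrightarrow> smf (smf d) = d"
    and uv: "(u, v) \<in> (RWg n C al smf)\<^sup>*"
  shows "(v, u) \<in> (RWg n C al smf)\<^sup>*"
proof -
  have "sym (RWg n C al smf)" unfolding sym_def using RW_sym[OF smC sminv] by blast
  then show ?thesis using uv sym_rtrancl unfolding sym_def by blast
qed

lemma RW_in:
  assumes smC: "\<And>d. d \<in> C \<Longrightarrow> smf d \<in> C" and uv: "(u, v) \<in> (RWg n C al smf)\<^sup>*" and u: "u \<in> tdarts n C"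
  shows "v \<in> tdarts n C"
  using uv
proof (induction rule: rtrancl_induct)
  case base then show ?case using u .
next
  case (step y z)
  then show ?case using A.alX smC unfolding RWg_def by auto
qed

section \<open>The closure\<close>

lemma cl_emb:
  assumes smo: "\<And>d. d \<in> C \<Longrightarrow> smoc (Inl (Inl d)) = Inl (Inl (smf d))"
    and uv: "(u, v) \<in> (RWg n C al smf)\<^sup>*"
  shows "(Inl u, Inl v) \<in> (map_rel (cl_darts n C) (cl_edge al m) smoc)\<^sup>*"
  using uv
proof (induction rule: rtrancl_induct)
  case base then show ?case by simp
next
  case (step y z)
  from step(2) have y: "y \<in> tdarts n C" and c: "z = al y \<or> (\<exists>d. y = Inl d \<and> z = Inl (smf d))"
    unfolding RWg_def by auto
  have yc: "Inl y \<in> cl_darts n C" using y unfolding cl_darts_def by simp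
  have "(Inl y, Inl z) \<in> map_rel (cl_darts n C) (cl_edge al m) smoc"
    using c
  proof
    assume "z = al y" then show ?thesis using yc unfolding map_rel_def cl_edge_def by simp
  next
    assume "\<exists>d. y = Inl d \<and> z = Inl (smf d)"
    then obtain d where d: "y = Inl d" "z = Inl (smf d)" by blast
    then have "d \<in> C" using y by simp
    then show ?thesis using yc d smo unfolding map_rel_def by simp
  qed
  then show ?case by (rule rtrancl_into_rtrancl[OF step(3)])
qed

lemma cl_bridge:
  assumes smo1: "\<And>j. j \<in> {1..2*n} \<Longrightarrow> smoc (Inl (Inr j)) = Inr j"
    and smo2: "\<And>j. j \<in> {1..2*n} \<Longrightarrow> smoc (Inr j) = Inl (Inr j)"
    and p: "p \<in> {1..2*n}" and mp: "m p \<in> {1..2*n}"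
  shows "(Inl (Inr p), Inl (Inr (m p))) \<in> (map_rel (cl_darts n C) (cl_edge al m) smoc)\<^sup>*"
proof -
  let ?R = "map_rel (cl_darts n C) (cl_edge al m) smoc"
  have d1: "Inl (Inr p) \<in> cl_darts n C" using p unfolding cl_darts_def by simp
  have d2: "Inr p \<in> cl_darts n C" using p unfolding cl_darts_def by simp
  have d3: "Inr (m p) \<in> cl_darts n C" using mp unfolding cl_darts_def by simp
  have s1: "(Inl (Inr p), Inr p) \<in> ?R" using d1 smo1[OF p] unfolding map_rel_def by simp
  have s2: "(Inr p, Inr (m p)) \<in> ?R" using d2 unfolding map_rel_def cl_edge_def by simp
  have s3: "(Inr (m p), Inl (Inr (m p))) \<in> ?R" using d3 smo2[OF mp] unfolding map_rel_def by simp
  show ?thesis using s1 s2 s3 by (meson r_into_rtrancl rtrancl_trans)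
qed

lemma core:
  assumes smC: "\<And>d. d \<in> C \<Longrightarrow> smf d \<in> C" and sminv: "\<And>d. d \<in> C \<Longrightarrow> smf (smf d) = d"
    and arcs: "\<And>j. j \<in> {1..2*n} \<Longrightarrow> \<exists>k\<in>{1..2*n}. (Inr j, Inr k) \<in> (RWg n C al smf)\<^sup>* \<and> (odd j \<longleftrightarrow> even k)"
    and smo: "\<And>d. d \<in> C \<Longrightarrow> smoc (Inl (Inl d)) = Inl (Inl (smf d))"
    and smo1: "\<And>j. j \<in> {1..2*n} \<Longrightarrow> smoc (Inl (Inr j)) = Inr j"
    and smo2: "\<And>j. j \<in> {1..2*n} \<Longrightarrow> smoc (Inr j) = Inl (Inr j)"
    and reach: "(x, y) \<in> (RWg n C al smf)\<^sup>* \<or>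
       ((\<exists>j\<in>{1..2*n}. (x, Inr j) \<in> (RWg n C al smf)\<^sup>*) \<and> (\<exists>k\<in>{1..2*n}. (y, Inr k) \<in> (RWg n C al smf)\<^sup>*))"
  shows "\<exists>m. noncrossing_matching n m \<and> (Inl x, Inl y) \<in> (map_rel (cl_darts n C) (cl_edge al m) smoc)\<^sup>*"
proof -
  let ?RW = "RWg n C al smf"
  from reach show ?thesis
  proof
    assume "(x, y) \<in> ?RW\<^sup>*"
    moreover obtain m where "noncrossing_matching n m"
      using exists_nc[of 1 2 n] A.npos by auto
    ultimately show ?thesis using cl_emb[where smoc=smoc and smf=smf, OF smo] by blast
  next
    assume "(\<exists>j\<in>{1..2*n}. (x, Inr j) \<in> ?RW\<^sup>*) \<and> (\<exists>k\<in>{1..2*n}. (y, Inr k) \<in> ?RW\<^sup>*)"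
    then obtain j k where j: "j \<in> {1..2*n}" "(x, Inr j) \<in> ?RW\<^sup>*" and k: "k \<in> {1..2*n}" "(y, Inr k) \<in> ?RW\<^sup>*"
      by blast
    obtain j' where j': "j' \<in> {1..2*n}" "(Inr j, Inr j') \<in> ?RW\<^sup>*" "odd j \<longleftrightarrow> even j'" using arcs[OF j(1)] by blast
    obtain k' where k': "k' \<in> {1..2*n}" "(Inr k, Inr k') \<in> ?RW\<^sup>*" "odd k \<longleftrightarrow> even k'" using arcs[OF k(1)] by blast
    obtain p where p: "p \<in> {1..2*n}" "odd p" "(x, Inr p) \<in> ?RW\<^sup>*"
    proof (cases "odd j")
      case True then show ?thesis using that j by blast
    next
      case False then show ?thesis using that[of j'] j j' rtrancl_trans by fastforce
    qed
    obtain q where q: "q \<in> {1..2*n}" "even q" "(y, Inr q) \<in> ?RW\<^sup>*"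
    proof (cases "even k")
      case True then show ?thesis using that k by blast
    next
      case False then show ?thesis using that[of k'] k k' rtrancl_trans by fastforce
    qed
    obtain m where m: "noncrossing_matching n m" "m p = q" using exists_nc[OF p(2) q(2) p(1) q(1)] by blast
    have 1: "(Inl x, Inl (Inr p)) \<in> (map_rel (cl_darts n C) (cl_edge al m) smoc)\<^sup>*"
      using cl_emb[where smoc=smoc and smf=smf, OF smo p(3)] .
    have 2: "(Inl (Inr p), Inl (Inr q)) \<in> (map_rel (cl_darts n C) (cl_edge al m) smoc)\<^sup>*"
      using cl_bridge[OF smo1 smo2 p(1), of m] m(2) q(1) by simp
    have "(Inr q, y) \<in> ?RW\<^sup>*" using RW_sym_rt[OF smC sminv q(3)] .
    then have 3: "(Inl (Inr q), Inl y) \<in> (map_rel (cl_darts n C) (cl_edge al m) smoc)\<^sup>*"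
      using cl_emb[where smoc=smoc and smf=smf, OF smo] by blast
    show ?thesis using 1 2 3 m(1) by (meson rtrancl_trans)
  qed
qed

end



lemma map_rel_sym_rt:
  assumes a: "\<forall>w\<in>H. a w \<in> H \<and> a (a w) = w" and s: "\<forall>w\<in>H. s w \<in> H \<and> s (s w) = w"
    and uv: "(u, v) \<in> (map_rel H a s)\<^sup>*"
  shows "(v, u) \<in> (map_rel H a s)\<^sup>*"
proof -
  have "sym (map_rel H a s)" unfolding sym_def map_rel_def using a s by auto
  then show ?thesis using uv sym_rtrancl unfolding sym_def by blast
qed

lemma LT_emb_inj: "LT_emb b u = LT_emb b v \<Longrightarrow> u = v"
  by (cases u; cases v; cases b) (auto simp: LT_emb_def)

lemma LT_emb_T: "LT_emb True (Inl d) = Inl (Inl d)" by (simp add: LT_emb_def)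
lemma LT_emb_F: "LT_emb False (Inl d) = Inl (Inr d)" by (simp add: LT_emb_def)
lemma LT_emb_R: "LT_emb b (Inr j) = Inr (j, b)" by (simp add: LT_emb_def)

lemma LT_edge_emb: "LT_edge al (LT_emb b z) = LT_emb b (al z)"
  by (cases z; cases b) (simp_all add: LT_edge_def LT_emb_def)

lemma LT_darts_in: "z \<in> tdarts n C \<Longrightarrow> LT_emb b z \<in> LT_darts n C"
  by (cases z; cases b) (auto simp: LT_emb_def LT_darts_def)

lemma LT_darts_cases:
  assumes "w \<in> LT_darts n C"
  obtains b z where "z \<in> tdarts n C" "w = LT_emb b z"
proof -
  from assms consider (a) d where "w = Inl (Inl d)" "d \<in> C" | (b) d where "w = Inl (Inr d)" "d \<in> C"
    | (c) j b where "w = Inr (j, b)" "j \<in> {1..2*n}"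
    unfolding LT_darts_def by auto
  then show ?thesis
  proof cases
    case a then show ?thesis using that[of "Inl d" True] by (simp add: LT_emb_def)
  next
    case b then show ?thesis using that[of "Inl d" False] by (simp add: LT_emb_def)
  next
    case c then show ?thesis using that[of "Inr j" b] by (simp add: LT_emb_def)
  qed
qed

lemma LT_rot_simps:
  "LT_rot C sg (Inl (Inl d)) = Inl (Inl (sg d))"
  "LT_rot C sg (Inl (Inr d)) = Inl (Inr (inv_into C sg d))"
  "LT_rot C sg (Inr (j, b)) = Inr (j, \<not> b)"
  by (simp_all add: LT_rot_def)

lemma LT_over_simps:
  "Inl (Inl d) \<in> LT_over Ov \<longleftrightarrow> d \<in> Ov"
  "Inl (Inr d) \<in> LT_over Ov \<longleftrightarrow> d \<in> Ov"
  "Inr p \<notin> LT_over Ov"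
  by (auto simp: LT_over_def)

lemma cl_rot_simps:
  "cl_rot sg (Inl (Inl d)) = Inl (Inl (sg d))"
  "cl_rot sg (Inl (Inr j)) = Inr j"
  "cl_rot sg (Inr j) = Inl (Inr j)"
  by (simp_all add: cl_rot_def)

lemma cl_over_simps:
  "Inl (Inl d) \<in> cl_over Ov \<longleftrightarrow> d \<in> Ov"
  "Inl (Inr j) \<notin> cl_over Ov"
  "Inr j \<notin> cl_over Ov"
  by (auto simp: cl_over_def)

context tdn begin

lemma sinv_eq: "A.sinv = inv_into C sg" by (simp add: A.sinv_def)

lemma LT_rot_inj: "inj_on (LT_rot C sg) (LT_darts n C)"
proof (rule inj_onI)
  fix u v assume u: "u \<in> LT_darts n C" and v: "v \<in> LT_darts n C" and e: "LT_rot C sg u = LT_rot C sg v"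
  have sinvinj: "\<And>x y. x \<in> C \<Longrightarrow> y \<in> C \<Longrightarrow> A.sinv x = A.sinv y \<Longrightarrow> x = y" using A.sg_sinv by metis
  from u v e show "u = v"
    unfolding LT_darts_def
    by (auto simp: LT_rot_simps sinv_eq[symmetric] dest: A.sg_inj sinvinj)
qed

lemma LT_inv1: "d \<in> C \<Longrightarrow> inv_into (LT_darts n C) (LT_rot C sg) (Inl (Inl d)) = Inl (Inl (A.sinv d))"
  by (rule inv_into_f_eq[OF LT_rot_inj]) (auto simp: LT_darts_def LT_rot_simps A.sinvC A.sg_sinv)

lemma LT_inv2: "d \<in> C \<Longrightarrow> inv_into (LT_darts n C) (LT_rot C sg) (Inl (Inr d)) = Inl (Inr (sg d))"
  by (rule inv_into_f_eq[OF LT_rot_inj]) (auto simp: LT_darts_def LT_rot_simps A.sgC A.sinv_sg sinv_eq[symmetric])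

abbreviation "LH \<equiv> LT_darts n C"
abbreviation "LsA \<equiv> smoothA LH (LT_rot C sg) (LT_over Ov)"
abbreviation "LsI \<equiv> smoothAinv LH (LT_rot C sg) (LT_over Ov)"

lemma sA_def': "d \<in> Ov \<Longrightarrow> sA d = A.sinv d" "d \<notin> Ov \<Longrightarrow> sA d = sg d"
  by (simp_all add: smA_def sinv_eq)
lemma sI_def': "d \<in> Ov \<Longrightarrow> sI d = sg d" "d \<notin> Ov \<Longrightarrow> sI d = A.sinv d"
  by (simp_all add: smI_def sinv_eq)

lemma sinv2_ne: "d \<in> C \<Longrightarrow> A.sinv (A.sinv d) \<noteq> d"
proof
  assume d: "d \<in> C" and e: "A.sinv (A.sinv d) = d"
  have "sg (sg d) = sg (sg (A.sinv (A.sinv d)))" using e by simp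
  also have "\<dots> = d" using A.sg_sinv A.sinvC d by simp
  finally show False using A.cprops d by blast
qed

lemma LsA_T: "d \<in> C \<Longrightarrow> LsA (LT_emb True (Inl d)) = LT_emb True (Inl (sA d))"
  by (cases "d \<in> Ov") (simp_all add: LT_emb_T smoothA_def LT_over_simps LT_inv1 LT_rot_simps sA_def')
lemma LsA_F: "d \<in> C \<Longrightarrow> LsA (LT_emb False (Inl d)) = LT_emb False (Inl (sI d))"
  by (cases "d \<in> Ov") (simp_all add: LT_emb_F smoothA_def LT_over_simps LT_inv2 LT_rot_simps sI_def' sinv_eq)
lemma LsI_T: "d \<in> C \<Longrightarrow> LsI (LT_emb True (Inl d)) = LT_emb True (Inl (sI d))"
proof (cases "d \<in> Ov")
  case True then show ?thesis by (simp add: LT_emb_T smoothAinv_def LT_over_simps LT_rot_simps sI_def')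
next
  case False
  assume d: "d \<in> C"
  have "sg (sg d) \<noteq> d" using A.cprops d by blast
  then show ?thesis using False d by (simp add: LT_emb_T smoothAinv_def LT_over_simps LT_rot_simps sI_def' LT_inv1)
qed
lemma LsI_F: "d \<in> C \<Longrightarrow> LsI (LT_emb False (Inl d)) = LT_emb False (Inl (sA d))"
proof (cases "d \<in> Ov")
  case True then show ?thesis by (simp add: LT_emb_F smoothAinv_def LT_over_simps LT_rot_simps sA_def' sinv_eq)
next
  case False
  assume d: "d \<in> C"
  have "A.sinv (A.sinv d) \<noteq> d" using sinv2_ne d by blast
  then show ?thesis using False d by (simp add: LT_emb_F smoothAinv_def LT_over_simps LT_rot_simps sA_def' LT_inv2 sinv_eq)
qed
lemma LsA_R: "LsA (Inr (j, b)) = Inr (j, \<not> b)" by (simp add: smoothA_def LT_over_simps LT_rot_simps)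
lemma LsI_R: "LsI (Inr (j, b)) = Inr (j, \<not> b)" by (simp add: smoothAinv_def LT_over_simps LT_rot_simps)

lemma LT_edge_inv: "\<forall>w\<in>LH. LT_edge al w \<in> LH \<and> LT_edge al (LT_edge al w) = w"
proof
  fix w assume "w \<in> LH"
  then obtain b z where z: "z \<in> tdarts n C" "w = LT_emb b z" by (rule LT_darts_cases)
  then show "LT_edge al w \<in> LH \<and> LT_edge al (LT_edge al w) = w"
    using LT_edge_emb A.alX A.alal LT_darts_in by metis
qed

lemma smo_inv:
  assumes T: "\<And>d. d \<in> C \<Longrightarrow> smo (LT_emb True (Inl d)) = LT_emb True (Inl (f1 d))"
    and F: "\<And>d. d \<in> C \<Longrightarrow> smo (LT_emb False (Inl d)) = LT_emb False (Inl (f2 d))"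
    and R: "\<And>j b. smo (Inr (j, b)) = Inr (j, \<not> b)"
    and f1: "\<And>d. d \<in> C \<Longrightarrow> f1 d \<in> C \<and> f1 (f1 d) = d"
    and f2: "\<And>d. d \<in> C \<Longrightarrow> f2 d \<in> C \<and> f2 (f2 d) = d"
  shows "\<forall>w\<in>LH. smo w \<in> LH \<and> smo (smo w) = w"
proof
  fix w assume "w \<in> LH"
  then obtain b z where z: "z \<in> tdarts n C" "w = LT_emb b z" by (rule LT_darts_cases)
  show "smo w \<in> LH \<and> smo (smo w) = w"
  proof (cases z)
    case (Inl d)
    then have d: "d \<in> C" using z by simp
    show ?thesis
    proof (cases b)
      case True then show ?thesis using T[OF d] T[OF conjunct1[OF f1[OF d]]] f1[OF d] z Inl LT_darts_in[of "Inl (f1 d)" n C True] d by simp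
    next
      case False then show ?thesis using F[OF d] F[OF conjunct1[OF f2[OF d]]] f2[OF d] z Inl LT_darts_in[of "Inl (f2 d)" n C False] d by simp
    qed
  next
    case (Inr j)
    then show ?thesis using z R by (simp add: LT_emb_R LT_darts_def)
  qed
qed

lemma LsA_inv: "\<forall>w\<in>LH. LsA w \<in> LH \<and> LsA (LsA w) = w"
  by (rule smo_inv[OF LsA_T LsA_F LsA_R]) (auto simp: sA_C sA_inv sI_C sI_inv)
lemma LsI_inv: "\<forall>w\<in>LH. LsI w \<in> LH \<and> LsI (LsI w) = w"
  by (rule smo_inv[OF LsI_T LsI_F LsI_R]) (auto simp: sA_C sA_inv sI_C sI_inv)

lemma LT_closed:
  assumes smC: "\<And>d. d \<in> C \<Longrightarrow> smf d \<in> C"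
    and smob: "\<And>d. d \<in> C \<Longrightarrow> smo (LT_emb b (Inl d)) = LT_emb b (Inl (smf d))"
    and x: "x \<in> tdarts n C"
    and noR: "\<forall>j. (x, Inr j) \<notin> (RWg n C al smf)\<^sup>*"
    and p: "(LT_emb b x, w) \<in> (map_rel LH (LT_edge al) smo)\<^sup>*"
  shows "\<exists>z. (x, z) \<in> (RWg n C al smf)\<^sup>* \<and> w = LT_emb b z"
  using p
proof (induction rule: rtrancl_induct)
  case base then show ?case by blast
next
  case (step w w')
  then obtain z where z: "(x, z) \<in> (RWg n C al smf)\<^sup>*" "w = LT_emb b z" by blast
  have zX: "z \<in> tdarts n C" using RW_in[OF smC z(1) x] .
  obtain d where d: "z = Inl d" "d \<in> C"
  proof (cases z)
    case (Inl d) then show ?thesis using that zX by simp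
  next
    case (Inr j) then show ?thesis using noR z(1) by blast
  qed
  from step(2) have "w' = LT_edge al w \<or> w' = smo w" unfolding map_rel_def by auto
  then show ?case
  proof
    assume "w' = LT_edge al w"
    then have e: "w' = LT_emb b (al z)" using z(2) LT_edge_emb by simp
    have st: "(z, al z) \<in> RWg n C al smf" using zX unfolding RWg_def by simp
    have "(x, al z) \<in> (RWg n C al smf)\<^sup>*" using rtrancl_into_rtrancl[OF z(1) st] .
    then show ?thesis using e by blast
  next
    assume "w' = smo w"
    then have e: "w' = LT_emb b (Inl (smf d))" using z(2) d smob by simp
    have st: "(z, Inl (smf d)) \<in> RWg n C al smf" using zX d unfolding RWg_def by simp
    have "(x, Inl (smf d)) \<in> (RWg n C al smf)\<^sup>*" using rtrancl_into_rtrancl[OF z(1) st] .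
    then show ?thesis using e by blast
  qed
qed

lemma LT_reach:
  assumes smC: "\<And>d. d \<in> C \<Longrightarrow> smf d \<in> C" and sminv: "\<And>d. d \<in> C \<Longrightarrow> smf (smf d) = d"
    and smob: "\<And>d. d \<in> C \<Longrightarrow> smo (LT_emb b (Inl d)) = LT_emb b (Inl (smf d))"
    and smoinv: "\<forall>w\<in>LH. smo w \<in> LH \<and> smo (smo w) = w"
    and x: "x \<in> tdarts n C" and y: "y \<in> tdarts n C"
    and p: "(LT_emb b x, LT_emb b y) \<in> (map_rel LH (LT_edge al) smo)\<^sup>*"
  shows "(x, y) \<in> (RWg n C al smf)\<^sup>* \<or>
       ((\<exists>j\<in>{1..2*n}. (x, Inr j) \<in> (RWg n C al smf)\<^sup>*) \<and> (\<exists>k\<in>{1..2*n}. (y, Inr k) \<in> (RWg n C al smf)\<^sup>*))"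
proof -
  let ?RW = "RWg n C al smf"
  have inr: "j \<in> {1..2*n}" if "(u, Inr j) \<in> ?RW\<^sup>*" "u \<in> tdarts n C" for u j
    using RW_in[OF smC that] by simp
  show ?thesis
  proof (cases "\<exists>j. (x, Inr j) \<in> ?RW\<^sup>*")
    case False
    obtain z where "(x, z) \<in> ?RW\<^sup>*" "LT_emb b y = LT_emb b z" using LT_closed[OF smC smob x _ p] False by blast
    then show ?thesis using LT_emb_inj by blast
  next
    case True
    then obtain j where j: "(x, Inr j) \<in> ?RW\<^sup>*" by blast
    show ?thesis
    proof (cases "\<exists>k. (y, Inr k) \<in> ?RW\<^sup>*")
      case True
      then obtain k where k: "(y, Inr k) \<in> ?RW\<^sup>*" by blast
      then show ?thesis using j inr x y by blast
    next
      case False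
      have p': "(LT_emb b y, LT_emb b x) \<in> (map_rel LH (LT_edge al) smo)\<^sup>*"
        using map_rel_sym_rt[OF LT_edge_inv smoinv p] .
      obtain z where "(y, z) \<in> ?RW\<^sup>*" "LT_emb b x = LT_emb b z" using LT_closed[OF smC smob y _ p'] False by blast
      then have "(y, x) \<in> ?RW\<^sup>*" using LT_emb_inj by blast
      then show ?thesis using RW_sym_rt[OF smC sminv] by blast
    qed
  qed
qed

end



context tdn begin

abbreviation "CH \<equiv> cl_darts n C"
abbreviation "CsA \<equiv> smoothA CH (cl_rot sg) (cl_over Ov)"
abbreviation "CsI \<equiv> smoothAinv CH (cl_rot sg) (cl_over Ov)"

lemma cl_rot_inj: "inj_on (cl_rot sg) CH"
proof (rule inj_onI)
  fix u v assume u: "u \<in> CH" and v: "v \<in> CH" and e: "cl_rot sg u = cl_rot sg v"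
  from u v e show "u = v"
    unfolding cl_darts_def tdarts_def
    by (auto simp: cl_rot_simps dest: A.sg_inj)
qed

lemma cl_inv1: "d \<in> C \<Longrightarrow> inv_into CH (cl_rot sg) (Inl (Inl d)) = Inl (Inl (A.sinv d))"
  by (rule inv_into_f_eq[OF cl_rot_inj]) (auto simp: cl_darts_def cl_rot_simps A.sinvC A.sg_sinv)

lemma CsA_1: "d \<in> C \<Longrightarrow> CsA (Inl (Inl d)) = Inl (Inl (sA d))"
  by (cases "d \<in> Ov") (simp_all add: smoothA_def cl_over_simps cl_inv1 cl_rot_simps sA_def')
lemma CsA_2: "CsA (Inl (Inr j)) = Inr j" by (simp add: smoothA_def cl_over_simps cl_rot_simps)
lemma CsA_3: "CsA (Inr j) = Inl (Inr j)" by (simp add: smoothA_def cl_over_simps cl_rot_simps)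

lemma CsI_1: "d \<in> C \<Longrightarrow> CsI (Inl (Inl d)) = Inl (Inl (sI d))"
proof (cases "d \<in> Ov")
  case True then show ?thesis by (simp add: smoothAinv_def cl_over_simps cl_rot_simps sI_def')
next
  case False
  assume d: "d \<in> C"
  have "sg (sg d) \<noteq> d" using A.cprops d by blast
  then show ?thesis using False d by (simp add: smoothAinv_def cl_over_simps cl_rot_simps sI_def' cl_inv1)
qed
lemma CsI_2: "CsI (Inl (Inr j)) = Inr j" by (simp add: smoothAinv_def cl_over_simps cl_rot_simps)
lemma CsI_3: "CsI (Inr j) = Inl (Inr j)" by (simp add: smoothAinv_def cl_over_simps cl_rot_simps)

lemma sA_inv': "\<And>d. d \<in> C \<Longrightarrow> sA d \<in> C \<and> sA (sA d) = d" using sA_C sA_inv by blast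
lemma sI_inv': "\<And>d. d \<in> C \<Longrightarrow> sI d \<in> C \<and> sI (sI d) = d" using sI_C sI_inv by blast

end

theorem mainTheorem1:
  fixes n :: nat and C :: "'d set" and sg :: "'d \<Rightarrow> 'd" and Ov :: "'d set"
    and al :: "'d + nat \<Rightarrow> 'd + nat"
  assumes "tangle_diagram n C sg Ov al"
    and "adequate_tangle n C sg Ov al"
  shows "adequate (LT_darts n C) (LT_edge al) (LT_rot C sg) (LT_over Ov)"
proof (cases "n = 0")
  case True
  have "\<forall>x\<in>tdarts n C. \<exists>j\<in>{1..2*n}. (x, Inr j) \<in> (strand_rel n C sg al)\<^sup>*"
    using assms(1) unfolding tangle_diagram_def by blast
  then have "tdarts n C = {}" using True by auto
  then have "C = {}" unfolding tdarts_def by auto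
  moreover have "Ov \<subseteq> C" using assms(1) unfolding tangle_diagram_def by blast
  ultimately have "LT_over Ov = {}" unfolding LT_over_def by auto
  then show ?thesis unfolding adequate_def A_adequate_def Ainv_adequate_def by simp
next
  case False
  interpret tdn n C sg Ov al using assms(1) False by unfold_locales auto
  have cl: "adequate CH (cl_edge al m) (cl_rot sg) (cl_over Ov)" if "noncrossing_matching n m" for m
    using assms(2) that unfolding adequate_tangle_def by blast
  have OvC: "Ov \<subseteq> C" using A.OvC .
  have A: "A_adequate LH (LT_edge al) (LT_rot C sg) (LT_over Ov)"
    unfolding A_adequate_def same_circle_def
  proof
    fix h assume h: "h \<in> LT_over Ov"
    then obtain d where d: "d \<in> Ov" "h = Inl (Inl d) \<or> h = Inl (Inr d)" unfolding LT_over_def by auto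
    have dC: "d \<in> C" using d OvC by auto
    from d(2) show "(h, LT_rot C sg h) \<notin> (map_rel LH (LT_edge al) LsA)\<^sup>*"
    proof
      assume hd: "h = Inl (Inl d)"
      show ?thesis
      proof
        assume p: "(h, LT_rot C sg h) \<in> (map_rel LH (LT_edge al) LsA)\<^sup>*"
        have p': "(LT_emb True (Inl d), LT_emb True (Inl (sg d))) \<in> (map_rel LH (LT_edge al) LsA)\<^sup>*"
          using p hd by (simp add: LT_emb_T LT_rot_simps)
        note R = LT_reach[OF sA_C sA_inv LsA_T LsA_inv _ _ p'] dC A.sgC[OF dC]
        obtain m where m: "noncrossing_matching n m"
          "(Inl (Inl d), Inl (Inl (sg d))) \<in> (map_rel CH (cl_edge al m) CsA)\<^sup>*"
          using core[OF sA_C sA_inv arcsA CsA_1 CsA_2 CsA_3, of "Inl d" "Inl (sg d)"] R by auto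
        have "A_adequate CH (cl_edge al m) (cl_rot sg) (cl_over Ov)" using cl[OF m(1)] unfolding adequate_def by blast
        then show False using m(2) d(1) unfolding A_adequate_def same_circle_def
          by (auto simp: cl_over_def cl_rot_simps)
      qed
    next
      assume hd: "h = Inl (Inr d)"
      show ?thesis
      proof
        assume p: "(h, LT_rot C sg h) \<in> (map_rel LH (LT_edge al) LsA)\<^sup>*"
        have p': "(LT_emb False (Inl d), LT_emb False (Inl (A.sinv d))) \<in> (map_rel LH (LT_edge al) LsA)\<^sup>*"
          using p hd by (simp add: LT_emb_F LT_rot_simps sinv_eq)
        note R = LT_reach[OF sI_C sI_inv LsA_F LsA_inv _ _ p'] dC A.sinvC[OF dC]
        obtain m where m: "noncrossing_matching n m"
          "(Inl (Inl d), Inl (Inl (A.sinv d))) \<in> (map_rel CH (cl_edge al m) CsI)\<^sup>*"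
          using core[OF sI_C sI_inv arcsI CsI_1 CsI_2 CsI_3, of "Inl d" "Inl (A.sinv d)"] R by auto
        have "Ainv_adequate CH (cl_edge al m) (cl_rot sg) (cl_over Ov)" using cl[OF m(1)] unfolding adequate_def by blast
        then show False using m(2) d(1) dC unfolding Ainv_adequate_def same_circle_def
          by (auto simp: cl_over_def cl_inv1)
      qed
    qed
  qed
  have I: "Ainv_adequate LH (LT_edge al) (LT_rot C sg) (LT_over Ov)"
    unfolding Ainv_adequate_def same_circle_def
  proof
    fix h assume h: "h \<in> LT_over Ov"
    then obtain d where d: "d \<in> Ov" "h = Inl (Inl d) \<or> h = Inl (Inr d)" unfolding LT_over_def by auto
    have dC: "d \<in> C" using d OvC by auto
    from d(2) show "(h, inv_into LH (LT_rot C sg) h) \<notin> (map_rel LH (LT_edge al) LsI)\<^sup>*"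
    proof
      assume hd: "h = Inl (Inl d)"
      show ?thesis
      proof
        assume p: "(h, inv_into LH (LT_rot C sg) h) \<in> (map_rel LH (LT_edge al) LsI)\<^sup>*"
        have p': "(LT_emb True (Inl d), LT_emb True (Inl (A.sinv d))) \<in> (map_rel LH (LT_edge al) LsI)\<^sup>*"
          using p hd dC by (simp add: LT_emb_T LT_inv1)
        note R = LT_reach[OF sI_C sI_inv LsI_T LsI_inv _ _ p'] dC A.sinvC[OF dC]
        obtain m where m: "noncrossing_matching n m"
          "(Inl (Inl d), Inl (Inl (A.sinv d))) \<in> (map_rel CH (cl_edge al m) CsI)\<^sup>*"
          using core[OF sI_C sI_inv arcsI CsI_1 CsI_2 CsI_3, of "Inl d" "Inl (A.sinv d)"] R by auto
        have "Ainv_adequate CH (cl_edge al m) (cl_rot sg) (cl_over Ov)" using cl[OF m(1)] unfolding adequate_def by blast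
        then show False using m(2) d(1) dC unfolding Ainv_adequate_def same_circle_def
          by (auto simp: cl_over_def cl_inv1)
      qed
    next
      assume hd: "h = Inl (Inr d)"
      show ?thesis
      proof
        assume p: "(h, inv_into LH (LT_rot C sg) h) \<in> (map_rel LH (LT_edge al) LsI)\<^sup>*"
        have p': "(LT_emb False (Inl d), LT_emb False (Inl (sg d))) \<in> (map_rel LH (LT_edge al) LsI)\<^sup>*"
          using p hd dC by (simp add: LT_emb_F LT_inv2)
        note R = LT_reach[OF sA_C sA_inv LsI_F LsI_inv _ _ p'] dC A.sgC[OF dC]
        obtain m where m: "noncrossing_matching n m"
          "(Inl (Inl d), Inl (Inl (sg d))) \<in> (map_rel CH (cl_edge al m) CsA)\<^sup>*"
          using core[OF sA_C sA_inv arcsA CsA_1 CsA_2 CsA_3, of "Inl d" "Inl (sg d)"] R by auto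
        have "A_adequate CH (cl_edge al m) (cl_rot sg) (cl_over Ov)" using cl[OF m(1)] unfolding adequate_def by blast
        then show False using m(2) d(1) unfolding A_adequate_def same_circle_def
          by (auto simp: cl_over_def cl_rot_simps)
      qed
    qed
  qed
  show ?thesis unfolding adequate_def using A I by blast
qed


end
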